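(* Let $\sigma$ be a 2-structure and $X\subsetneq V(\sigma)$ with $\sigma[X]$ prime; write $\overline{X}=V(\sigma)\setminus X$. Suppose Statement (S3) holds (there is no $Y\subseteq\overline{X}$ with $|Y|=3$ and $\sigma[X\cup Y]$ prime). If $\sigma$ is prime, then: (1) Let $e\in E(\sigma)$. If $|\langle X\rangle^{(e,e)}_\sigma|\geq 2$, then $\sigma[\langle X\rangle_\sigma]$ is constant and $E(\sigma[\langle X\rangle_\sigma])=\{e[\langle X\rangle_\sigma]\}$. Similarly, for $\alpha\in X$, if $|X^{(e,e)}_\sigma(\alpha)|\geq 2$, then $\sigma[X_\sigma(\alpha)]$ is constant and $E(\sigma[X_\sigma(\alpha)])=\{e[X_\sigma(\alpha)]\}$. (2) Let $e,f\in E(\sigma)$ be distinct. If $|\langle X\rangle^{(e,f)}_\sigma|\geq 2$, then $\sigma[\langle X\rangle_\sigma]$ is linear and $E(\sigma[\langle X\rangle_\sigma])=\{e[\langle X\rangle_\sigma],f[\langle X\rangle_\sigma]\}$. Similarly, for $\alpha\in X$, if $|X^{(e,f)}_\sigma(\alpha)|\geq 2$, then $\sigma[X_\sigma(\alpha)]$ is linear and $E(\sigma[X_\sigma(\alpha)])=\{e[X_\sigma(\alpha)],f[X_\sigma(\alpha)]\}$.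
   Context: A 2-structure $\sigma$ consists of a vertex set $V(\sigma)$ and an equivalence relation $\equiv_\sigma$ on ordered pairs of distinct vertices; $E(\sigma)$ is its set of classes; $(v,w)_\sigma$ is the class of $(v,w)$ and $[v,w]_\sigma=((v,w)_\sigma,(w,v)_\sigma)$; $\sigma[W]$ is the induced 2-structure on $W$. For $e\in E(\sigma)$ and $W\subseteq V(\sigma)$, $e[W]=e\cap(W\times W)$. A module is a set $M$ such that for all $x,y\in M$ and $v\notin M$, $(x,v)\equiv_\sigma(y,v)$ and $(v,x)\equiv_\sigma(v,y)$; $\sigma$ is prime if $|V(\sigma)|\geq3$ and its only modules are $\emptyset$, $V(\sigma)$ and singletons. A 2-structure $\tau$ is constant if $|E(\tau)|=1$; $\tau$ is linear if there exist distinct $e,f\in E(\tau)$ such that the relation $\{(v,w): v\neq w,\ [v,w]_\tau=(e,f)\}$ is a (strict) linear order on $V(\tau)$. Given $\sigma[X]$ prime: $\langle X\rangle_\sigma=\{v\in\overline{X}: X\text{ is a module of }\sigma[X\cup\{v\}]\}$; for $\alpha\in X$, $X_\sigma(\alpha)=\{v\in\overline{X}:\{\alpha,v\}\text{ is a module of }\sigma[X\cup\{v\}]\}$. For $e,f\in E(\sigma)$: $\langle X\rangle^{(e,f)}_\sigma=\{v\in\langle X\rangle_\sigma:(v,\beta)\in e,(\beta,v)\in f\}$ for any $\beta\in X$; $X^{(e,f)}_\sigma(\alpha)=\{v\in X_\sigma(\alpha):(v,\alpha)\in e,(\alpha,v)\in f\}$. *)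

theory Defs
  imports Main
begin

text \<open>A 2-structure is a pair (V, R): a vertex set V and an equivalence relation R
  on the set of ordered pairs of distinct vertices of V.\<close>

type_synonym 'a twostr = "'a set \<times> (('a \<times> 'a) \<times> ('a \<times> 'a)) set"

definition dpairs :: "'a set \<Rightarrow> ('a \<times> 'a) set" where
  "dpairs V = {(v, w). v \<in> V \<and> w \<in> V \<and> v \<noteq> w}"

definition Vs :: "'a twostr \<Rightarrow> 'a set" where "Vs s = fst s"
definition Rel :: "'a twostr \<Rightarrow> (('a \<times> 'a) \<times> ('a \<times> 'a)) set" where "Rel s = snd s"

definition is_2structure :: "'a twostr \<Rightarrow> bool" where
  "is_2structure s \<longleftrightarrow> equiv (dpairs (Vs s)) (Rel s)"

definition Es :: "'a twostr \<Rightarrow> ('a \<times> 'a) set set" where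
  "Es s = dpairs (Vs s) // Rel s"

definition induced :: "'a twostr \<Rightarrow> 'a set \<Rightarrow> 'a twostr" where
  "induced s W = (W, Rel s \<inter> (dpairs W \<times> dpairs W))"

definition restr :: "('a \<times> 'a) set \<Rightarrow> 'a set \<Rightarrow> ('a \<times> 'a) set" where
  "restr e W = e \<inter> (W \<times> W)"

definition module :: "'a twostr \<Rightarrow> 'a set \<Rightarrow> bool" where
  "module s M \<longleftrightarrow> M \<subseteq> Vs s \<and>
     (\<forall>x\<in>M. \<forall>y\<in>M. \<forall>v\<in>Vs s - M.
        ((x, v), (y, v)) \<in> Rel s \<and> ((v, x), (v, y)) \<in> Rel s)"

text \<open>|A| \<ge> n, for possibly infinite A.\<close>
definition card_ge :: "nat \<Rightarrow> 'a set \<Rightarrow> bool" where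
  "card_ge n A \<longleftrightarrow> (\<exists>B\<subseteq>A. finite B \<and> card B = n)"

definition prime2 :: "'a twostr \<Rightarrow> bool" where
  "prime2 s \<longleftrightarrow> card_ge 3 (Vs s) \<and>
     (\<forall>M. module s M \<longrightarrow> M = {} \<or> M = Vs s \<or> (\<exists>x. M = {x}))"

definition constant2 :: "'a twostr \<Rightarrow> bool" where
  "constant2 t \<longleftrightarrow> card (Es t) = 1"

definition linear2 :: "'a twostr \<Rightarrow> bool" where
  "linear2 t \<longleftrightarrow> (\<exists>e\<in>Es t. \<exists>f\<in>Es t. e \<noteq> f \<and>
     strict_linear_order_on (Vs t)
       {(v, w). v \<in> Vs t \<and> w \<in> Vs t \<and> v \<noteq> w \<and> (v, w) \<in> e \<and> (w, v) \<in> f})"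

definition ext_set :: "'a twostr \<Rightarrow> 'a set \<Rightarrow> 'a set" where
  "ext_set s X = {v \<in> Vs s - X. module (induced s (X \<union> {v})) X}"

definition alpha_set :: "'a twostr \<Rightarrow> 'a set \<Rightarrow> 'a \<Rightarrow> 'a set" where
  "alpha_set s X \<alpha> = {v \<in> Vs s - X. module (induced s (X \<union> {v})) {\<alpha>, v}}"

text \<open>\<langle>X\<rangle>^(e,f)_s (the choice of \<beta> \<in> X is immaterial).\<close>
definition ext_set_ef :: "'a twostr \<Rightarrow> 'a set \<Rightarrow> ('a \<times> 'a) set \<Rightarrow> ('a \<times> 'a) set \<Rightarrow> 'a set" where
  "ext_set_ef s X e f = {v \<in> ext_set s X. \<forall>\<beta>\<in>X. (v, \<beta>) \<in> e \<and> (\<beta>, v) \<in> f}"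

definition alpha_set_ef :: "'a twostr \<Rightarrow> 'a set \<Rightarrow> 'a \<Rightarrow> ('a \<times> 'a) set \<Rightarrow> ('a \<times> 'a) set \<Rightarrow> 'a set" where
  "alpha_set_ef s X \<alpha> e f = {v \<in> alpha_set s X \<alpha>. (v, \<alpha>) \<in> e \<and> (\<alpha>, v) \<in> f}"

end

theory Submission
  imports Defs
begin

definition modl :: "(('a \<times> 'a) \<times> ('a \<times> 'a)) set \<Rightarrow> 'a set \<Rightarrow> 'a set \<Rightarrow> bool" where
  "modl R W M \<longleftrightarrow> M \<subseteq> W \<and> (\<forall>x\<in>M. \<forall>y\<in>M. \<forall>v\<in>W - M. ((x,v),(y,v)) \<in> R \<and> ((v,x),(v,y)) \<in> R)"

definition primeW :: "(('a \<times> 'a) \<times> ('a \<times> 'a)) set \<Rightarrow> 'a set \<Rightarrow> bool" where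
  "primeW R W \<longleftrightarrow> card_ge 3 W \<and> (\<forall>M. modl R W M \<longrightarrow> M = {} \<or> M = W \<or> (\<exists>x. M = {x}))"

lemma modl_out: "modl R W M \<Longrightarrow> x\<in>M \<Longrightarrow> y\<in>M \<Longrightarrow> v\<in>W \<Longrightarrow> v\<notin>M \<Longrightarrow> ((x,v),(y,v)) \<in> R \<and> ((v,x),(v,y)) \<in> R"
  unfolding modl_def by blast

lemma modl_restr: "modl R W M \<Longrightarrow> W' \<subseteq> W \<Longrightarrow> modl R W' (M \<inter> W')"
  unfolding modl_def by blast

lemma card_ge_mono: "card_ge n A \<Longrightarrow> A \<subseteq> B \<Longrightarrow> card_ge n B"
  unfolding card_ge_def by blast

lemma card3: "card_ge 3 W \<Longrightarrow> \<exists>a b c. a\<in>W \<and> b\<in>W \<and> c\<in>W \<and> a\<noteq>b \<and> a\<noteq>c \<and> b\<noteq>c"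
proof -
  assume "card_ge 3 W"
  then obtain B where B: "B \<subseteq> W" "card B = 3" unfolding card_ge_def by blast
  then obtain a b c where "B = {a,b,c}" "a\<noteq>b" "b\<noteq>c" "a\<noteq>c" unfolding card_3_iff by blast
  then show ?thesis using B(1) by blast
qed

lemma card3_other2: "card_ge 3 W \<Longrightarrow> \<exists>a b. a\<in>W \<and> b\<in>W \<and> a\<noteq>b \<and> a\<noteq>x \<and> b\<noteq>x"
proof -
  assume "card_ge 3 W"
  then obtain a b c where abc: "a\<in>W" "b\<in>W" "c\<in>W" "a\<noteq>b" "a\<noteq>c" "b\<noteq>c" using card3 by blast
  show ?thesis
  proof (cases "a = x")
    case True then show ?thesis using abc by blast
  next
    case False
    show ?thesis
    proof (cases "b = x")
      case True then show ?thesis using abc False by blast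
    next
      case False2: False then show ?thesis using abc False by blast
    qed
  qed
qed

lemma card3_other1: "card_ge 3 W \<Longrightarrow> \<exists>c\<in>W. c\<noteq>x \<and> c\<noteq>y"
proof -
  assume "card_ge 3 W"
  then obtain a b where ab: "a\<in>W" "b\<in>W" "a\<noteq>b" "a\<noteq>x" "b\<noteq>x" using card3_other2[of W x] by auto
  show ?thesis
  proof (cases "a = y")
    case True then show ?thesis using ab by blast
  next
    case False then show ?thesis using ab by blast
  qed
qed

lemma primeW_triv: "primeW R W \<Longrightarrow> modl R W M \<Longrightarrow> M = {} \<or> M = W \<or> (\<exists>x. M = {x})"
  unfolding primeW_def by simp

lemma primeW_nt: "primeW R W \<Longrightarrow> modl R W M \<Longrightarrow> x\<in>M \<Longrightarrow> y\<in>M \<Longrightarrow> x\<noteq>y \<Longrightarrow> z\<in>W \<Longrightarrow> z\<notin>M \<Longrightarrow> False"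
  by (metis primeW_triv empty_iff singletonD)

lemma tricho:
  assumes pZ: "primeW R Z" and y: "y \<notin> Z" and np: "\<not> primeW R (Z \<union> {y})"
  shows "modl R (Z \<union> {y}) Z \<or> (\<exists>g\<in>Z. modl R (Z \<union> {y}) {g, y})"
proof -
  have "card_ge 3 Z" using pZ by (simp add: primeW_def)
  then have c3: "card_ge 3 (Z \<union> {y})" by (rule card_ge_mono) blast
  then have "\<not> (\<forall>M. modl R (Z \<union> {y}) M \<longrightarrow> M = {} \<or> M = Z \<union> {y} \<or> (\<exists>x. M = {x}))"
    using np unfolding primeW_def by simp
  then obtain M where M: "modl R (Z \<union> {y}) M" and nt: "M \<noteq> {}" "M \<noteq> Z \<union> {y}" "\<forall>x. M \<noteq> {x}"
    by auto
  have MZ: "modl R Z (M \<inter> Z)" by (rule modl_restr[OF M]) blast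
  have MW: "M \<subseteq> Z \<union> {y}" using M unfolding modl_def by simp
  from primeW_triv[OF pZ MZ] show ?thesis
  proof (elim disjE exE)
    assume "M \<inter> Z = {}" then have "M \<subseteq> {y}" using MW by blast
    then have "M = {} \<or> M = {y}" by (metis subset_singletonD)
    then show ?thesis using nt by simp
  next
    assume a: "M \<inter> Z = Z"
    have "y \<notin> M"
    proof
      assume "y \<in> M" then have "Z \<union> {y} \<subseteq> M" using a by blast
      then show False using MW nt(2) by (simp add: subset_antisym)
    qed
    then have "M = Z" using MW a by blast
    then show ?thesis using M by simp
  next
    fix x assume x: "M \<inter> Z = {x}"
    have "y \<in> M"
    proof (rule ccontr)
      assume "y \<notin> M" then have "M = {x}" using x MW by blast
      then show False using nt by simp
    qed
    then have "M = {x, y}" using MW x by blast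
    then show ?thesis using M x by blast
  qed
qed

locale ctx =
  fixes \<sigma> :: "'a twostr" and X :: "'a set"
  assumes two: "is_2structure \<sigma>" and Xsub: "X \<subset> Vs \<sigma>" and pX: "prime2 (induced \<sigma> X)"
    and S3: "\<not> (\<exists>Y. Y \<subseteq> Vs \<sigma> - X \<and> card Y = 3 \<and> prime2 (induced \<sigma> (X \<union> Y)))"
    and pV: "prime2 \<sigma>"
begin

abbreviation "V \<equiv> Vs \<sigma>"
abbreviation "R \<equiv> Rel \<sigma>"

lemma eqv: "equiv (dpairs V) R" using two unfolding is_2structure_def .

lemma Rs: "(p,q) \<in> R \<Longrightarrow> (q,p) \<in> R" using eqv unfolding equiv_def sym_def by blast
lemma Rt: "(p,q) \<in> R \<Longrightarrow> (q,r) \<in> R \<Longrightarrow> (p,r) \<in> R" using eqv unfolding equiv_def trans_def by blast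
lemma Rrefl: "a \<in> V \<Longrightarrow> b \<in> V \<Longrightarrow> a \<noteq> b \<Longrightarrow> ((a,b),(a,b)) \<in> R"
  using eqv unfolding equiv_def refl_on_def dpairs_def by blast
lemma Rd: "(p,q) \<in> R \<Longrightarrow> p \<in> dpairs V \<and> q \<in> dpairs V"
  using eqv unfolding equiv_def refl_on_def by blast

lemma Vs_ind[simp]: "Vs (induced \<sigma> W) = W" by (simp add: induced_def Vs_def)
lemma Rel_ind[simp]: "Rel (induced \<sigma> W) = R \<inter> (dpairs W \<times> dpairs W)" by (simp add: induced_def Rel_def)

lemma module_ind: "module (induced \<sigma> W) M \<longleftrightarrow> modl R W M"
proof
  assume "module (induced \<sigma> W) M" then show "modl R W M" unfolding module_def modl_def by simp
next
  assume m: "modl R W M"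
  have "\<forall>x\<in>M. \<forall>y\<in>M. \<forall>v\<in>W - M. ((x,v),(y,v)) \<in> R \<inter> (dpairs W \<times> dpairs W) \<and> ((v,x),(v,y)) \<in> R \<inter> (dpairs W \<times> dpairs W)"
  proof (intro ballI)
    fix x y v assume xyv: "x \<in> M" "y \<in> M" "v \<in> W - M"
    then have "(x,v) \<in> dpairs W" "(y,v) \<in> dpairs W" "(v,x) \<in> dpairs W" "(v,y) \<in> dpairs W"
      using m unfolding modl_def dpairs_def by auto
    moreover have "((x,v),(y,v)) \<in> R" "((v,x),(v,y)) \<in> R" using m xyv unfolding modl_def by auto
    ultimately show "((x,v),(y,v)) \<in> R \<inter> (dpairs W \<times> dpairs W) \<and> ((v,x),(v,y)) \<in> R \<inter> (dpairs W \<times> dpairs W)"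
      by simp
  qed
  then show "module (induced \<sigma> W) M" using m unfolding module_def modl_def by simp
qed

lemma prime_ind: "prime2 (induced \<sigma> W) \<longleftrightarrow> primeW R W"
  unfolding prime2_def primeW_def module_ind by simp

lemma pVW: "primeW R V"
proof -
  have "module \<sigma> M \<longleftrightarrow> modl R V M" for M unfolding module_def modl_def by auto
  then show ?thesis using pV unfolding prime2_def primeW_def by simp
qed

lemma XV: "X \<subseteq> V" using Xsub by blast
lemma pXW: "primeW R X" using pX prime_ind by blast

lemma S3W: "Y \<subseteq> V - X \<Longrightarrow> card Y = 3 \<Longrightarrow> \<not> primeW R (X \<union> Y)"
  using S3 prime_ind by blast

lemma X3: "card_ge 3 X" using pXW unfolding primeW_def by blast

lemma G4: assumes x: "x \<in> X" and u: "\<forall>w\<in>X-{x}. ((x,w),p) \<in> R \<and> ((w,x),q) \<in> R" shows False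
proof -
  obtain a b where ab: "a\<in>X" "b\<in>X" "a\<noteq>b" "a\<noteq>x" "b\<noteq>x" using card3_other2[OF X3] by blast
  have "\<forall>m\<in>X - {x}. \<forall>m'\<in>X - {x}. \<forall>v\<in>X - (X - {x}). ((m,v),(m',v)) \<in> R \<and> ((v,m),(v,m')) \<in> R"
  proof (intro ballI)
    fix m m' v assume "m \<in> X - {x}" "m' \<in> X - {x}" "v \<in> X - (X - {x})"
    then have "v = x" "((x,m),p) \<in> R" "((m,x),q) \<in> R" "((x,m'),p) \<in> R" "((m',x),q) \<in> R" using u x by auto
    then show "((m,v),(m',v)) \<in> R \<and> ((v,m),(v,m')) \<in> R" using Rt[OF _ Rs] by blast
  qed
  then have "modl R X (X - {x})" unfolding modl_def by blast
  then show False using primeW_nt[OF pXW, of "X-{x}" a b x] ab x by blast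
qed

lemma G5: assumes x: "x \<in> X" and a: "a \<in> X" "x \<noteq> a"
  and u: "\<forall>w\<in>X-{x,a}. ((x,w),(a,w)) \<in> R \<and> ((w,x),(w,a)) \<in> R" shows False
proof -
  obtain c where c: "c\<in>X" "c\<noteq>x" "c\<noteq>a" using card3_other1[OF X3] by blast
  have "\<forall>m\<in>{x,a}. \<forall>m'\<in>{x,a}. \<forall>v\<in>X - {x,a}. ((m,v),(m',v)) \<in> R \<and> ((v,m),(v,m')) \<in> R"
  proof (intro ballI)
    fix m m' v assume m: "m \<in> {x,a}" "m' \<in> {x,a}" and v: "v \<in> X - {x,a}"
    then have v': "v \<in> V" "x \<in> V" "a \<in> V" "v \<noteq> x" "v \<noteq> a" using XV x a by auto
    have 1: "((x,v),(a,v)) \<in> R" "((v,x),(v,a)) \<in> R" using u v by auto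
    have "((a,v),(x,v)) \<in> R" "((v,a),(v,x)) \<in> R" "((x,v),(a,v)) \<in> R" "((v,x),(v,a)) \<in> R"
      "((x,v),(x,v)) \<in> R" "((v,x),(v,x)) \<in> R" "((a,v),(a,v)) \<in> R" "((v,a),(v,a)) \<in> R"
      using Rs[OF 1(1)] Rs[OF 1(2)] 1 v' Rrefl[of x v] Rrefl[of a v] Rrefl[of v x] Rrefl[of v a] by auto
    then show "((m,v),(m',v)) \<in> R \<and> ((v,m),(v,m')) \<in> R" using m by auto
  qed
  then have "modl R X {x,a}" unfolding modl_def using x a by blast
  then show False using primeW_nt[OF pXW, of "{x,a}" x a c] a c by blast
qed


definition inA :: "'a \<Rightarrow> bool" where
  "inA v \<longleftrightarrow> v \<in> V \<and> v \<notin> X \<and> (\<forall>x\<in>X. \<forall>y\<in>X. ((x,v),(y,v)) \<in> R \<and> ((v,x),(v,y)) \<in> R)"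
definition inB :: "'a \<Rightarrow> 'a \<Rightarrow> bool" where
  "inB a v \<longleftrightarrow> v \<in> V \<and> v \<notin> X \<and> (\<forall>w\<in>X-{a}. ((a,w),(v,w)) \<in> R \<and> ((w,a),(w,v)) \<in> R)"
definition sees :: "'a \<Rightarrow> 'a \<Rightarrow> 'a \<Rightarrow> bool" where
  "sees c y u \<longleftrightarrow> ((y,u),(y,c)) \<in> R \<and> ((u,y),(c,y)) \<in> R"
definition sty :: "'a \<Rightarrow> 'a \<Rightarrow> 'a \<Rightarrow> bool" where
  "sty c y u \<longleftrightarrow> ((y,c),(u,c)) \<in> R \<and> ((c,y),(c,u)) \<in> R"
definition nd :: "'a \<Rightarrow> 'a \<Rightarrow> 'a \<Rightarrow> bool" where
  "nd z y u \<longleftrightarrow> ((y,z),(u,z)) \<in> R \<and> ((z,y),(z,u)) \<in> R"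

lemma R3: "(p,q) \<in> R \<Longrightarrow> (q,r) \<in> R \<Longrightarrow> (r,s) \<in> R \<Longrightarrow> (p,s) \<in> R" using Rt by blast

lemma ext_set_eq: "ext_set \<sigma> X = {v. inA v}"
proof -
  have "v \<notin> X \<Longrightarrow> modl R (X \<union> {v}) X \<longleftrightarrow> (\<forall>x\<in>X. \<forall>y\<in>X. ((x,v),(y,v)) \<in> R \<and> ((v,x),(v,y)) \<in> R)" for v
  proof -
    assume v: "v \<notin> X"
    then have "(X \<union> {v}) - X = {v}" by blast
    then show ?thesis unfolding modl_def by (simp add: subset_insertI)
  qed
  then show ?thesis unfolding ext_set_def inA_def module_ind by blast
qed

lemma alpha_set_eq: assumes a: "a \<in> X" shows "alpha_set \<sigma> X a = {v. inB a v}"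
proof -
  have "modl R (X \<union> {v}) {a,v} \<longleftrightarrow> (\<forall>w\<in>X-{a}. ((a,w),(v,w)) \<in> R \<and> ((w,a),(w,v)) \<in> R)" if v: "v \<notin> X" "v \<in> V" for v
  proof
    assume m: "modl R (X \<union> {v}) {a,v}"
    show "\<forall>w\<in>X-{a}. ((a,w),(v,w)) \<in> R \<and> ((w,a),(w,v)) \<in> R"
    proof
      fix w assume "w \<in> X-{a}"
      then show "((a,w),(v,w)) \<in> R \<and> ((w,a),(w,v)) \<in> R" using modl_out[OF m, of a v w] v by blast
    qed
  next
    assume h: "\<forall>w\<in>X-{a}. ((a,w),(v,w)) \<in> R \<and> ((w,a),(w,v)) \<in> R"
    have "\<forall>x\<in>{a,v}. \<forall>y\<in>{a,v}. \<forall>w\<in>(X \<union> {v}) - {a,v}. ((x,w),(y,w)) \<in> R \<and> ((w,x),(w,y)) \<in> R"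
    proof (intro ballI)
      fix x y w assume xy: "x \<in> {a,v}" "y \<in> {a,v}" and w: "w \<in> (X \<union> {v}) - {a,v}"
      then have w': "w \<in> X - {a}" "w \<in> V" "a \<in> V" "w \<noteq> a" "w \<noteq> v" using XV a by auto
      have 1: "((a,w),(v,w)) \<in> R" "((w,a),(w,v)) \<in> R" using h w' by auto
      have "((a,w),(v,w)) \<in> R" "((w,a),(w,v)) \<in> R" "((v,w),(a,w)) \<in> R" "((w,v),(w,a)) \<in> R"
        "((a,w),(a,w)) \<in> R" "((w,a),(w,a)) \<in> R" "((v,w),(v,w)) \<in> R" "((w,v),(w,v)) \<in> R"
        using 1 Rs[OF 1(1)] Rs[OF 1(2)] Rrefl[of a w] Rrefl[of w a] Rrefl[of v w] Rrefl[of w v] w' v by auto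
      then show "((x,w),(y,w)) \<in> R \<and> ((w,x),(w,y)) \<in> R" using xy by auto
    qed
    then show "modl R (X \<union> {v}) {a,v}" unfolding modl_def using a by blast
  qed
  then show ?thesis unfolding alpha_set_def inB_def module_ind by blast
qed

lemma inA_unif: "inA u \<Longrightarrow> \<beta> \<in> X \<Longrightarrow> b \<in> X \<Longrightarrow> ((u,\<beta>),(u,b)) \<in> R \<and> ((\<beta>,u),(b,u)) \<in> R"
  unfolding inA_def by blast

lemma A_prime:
  assumes b: "b \<in> X" and u: "inA u" and z: "z \<in> V" "z \<notin> X" "\<not> inA z" and nz: "\<not> sees b u z"
  shows "primeW R (X \<union> {u,z})"
proof -
  have uz: "u \<noteq> z" using u z by blast
  have uX: "u \<notin> X" "u \<in> V" using u unfolding inA_def by auto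
  have c3: "card_ge 3 (X \<union> {u,z})" by (rule card_ge_mono[OF X3]) blast
  have "M = {} \<or> M = X \<union> {u,z} \<or> (\<exists>x. M = {x})" if M: "modl R (X \<union> {u,z}) M" for M
  proof (rule ccontr)
    assume "\<not> ?thesis"
    then have nt: "M \<noteq> {}" "M \<noteq> X \<union> {u,z}" "\<forall>x. M \<noteq> {x}" by auto
    have MW: "M \<subseteq> X \<union> {u,z}" using M unfolding modl_def by simp
    have MX: "modl R X (M \<inter> X)" by (rule modl_restr[OF M]) blast
    from primeW_triv[OF pXW MX] show False
    proof (elim disjE exE)
      assume e: "M \<inter> X = {}"
      have "u \<in> M"
      proof (rule ccontr)
        assume "u \<notin> M" then have "M \<subseteq> {z}" using MW e by blast
        then have "M = {} \<or> M = {z}" by (metis subset_singletonD)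
        then show False using nt by simp
      qed
      moreover have "z \<in> M"
      proof (rule ccontr)
        assume "z \<notin> M" then have "M \<subseteq> {u}" using MW e by blast
        then have "M = {} \<or> M = {u}" by (metis subset_singletonD)
        then show False using nt by simp
      qed
      ultimately have h: "\<forall>w\<in>X. ((u,w),(z,w)) \<in> R \<and> ((w,u),(w,z)) \<in> R"
        using modl_out[OF M] e by blast
      have "inA z" unfolding inA_def
      proof (intro conjI ballI)
        fix x y assume xy: "x \<in> X" "y \<in> X"
        have "((x,z),(x,u)) \<in> R" using h xy Rs by blast
        moreover have "((x,u),(y,u)) \<in> R" using u xy unfolding inA_def by blast
        moreover have "((y,u),(y,z)) \<in> R" using h xy by blast
        ultimately show "((x,z),(y,z)) \<in> R" using R3 by blast
        have "((z,x),(u,x)) \<in> R" using h xy Rs by blast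
        moreover have "((u,x),(u,y)) \<in> R" using u xy unfolding inA_def by blast
        moreover have "((u,y),(z,y)) \<in> R" using h xy by blast
        ultimately show "((z,x),(z,y)) \<in> R" using R3 by blast
      qed (use z in auto)
      then show False using z by blast
    next
      assume e: "M \<inter> X = X"
      show False
      proof (cases "z \<in> M")
        case False
        have "inA z" unfolding inA_def
        proof (intro conjI ballI)
          fix x y assume "x \<in> X" "y \<in> X"
          then show "((x,z),(y,z)) \<in> R" "((z,x),(z,y)) \<in> R" using modl_out[OF M, of x y z] e False by auto
        qed (use z in auto)
        then show False using z by blast
      next
        case True
        show False
        proof (cases "u \<in> M")
          case True2: True
          then have "X \<union> {u,z} \<subseteq> M" using True e by blast
          then show False using MW nt by blast
        next
          case False
          have "((z,u),(b,u)) \<in> R \<and> ((u,z),(u,b)) \<in> R" using modl_out[OF M, of z b u] e True False b by blast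
          then show False using nz unfolding sees_def by blast
        qed
      qed
    next
      fix x assume e: "M \<inter> X = {x}"
      then have x: "x \<in> X" "x \<in> M" by auto
      show False
      proof (cases "u \<in> M")
        case True
        have "\<forall>w\<in>X-{x}. ((x,w),(u,b)) \<in> R \<and> ((w,x),(b,u)) \<in> R"
        proof
          fix w assume w: "w \<in> X-{x}"
          then have wM: "w \<notin> M" using e by blast
          have 1: "((u,w),(x,w)) \<in> R" "((w,u),(w,x)) \<in> R" using modl_out[OF M, of u x w] True x wM w by auto
          have 2: "((u,w),(u,b)) \<in> R" "((w,u),(b,u)) \<in> R" using inA_unif[OF u _ b, of w] w by auto
          show "((x,w),(u,b)) \<in> R \<and> ((w,x),(b,u)) \<in> R" using Rt[OF Rs[OF 1(1)] 2(1)] Rt[OF Rs[OF 1(2)] 2(2)] by blast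
        qed
        then show False using G4[OF x(1)] by blast
      next
        case False
        have "z \<in> M"
        proof (rule ccontr)
          assume "z \<notin> M" then have "M = {x}" using MW e False by blast
          then show False using nt by simp
        qed
        then have 1: "((x,u),(z,u)) \<in> R" "((u,x),(u,z)) \<in> R" using modl_out[OF M, of x z u] x False by auto
        have 2: "((u,x),(u,b)) \<in> R" "((x,u),(b,u)) \<in> R" using inA_unif[OF u x(1) b] by auto
        have "((u,z),(u,b)) \<in> R" "((z,u),(b,u)) \<in> R" using Rt[OF Rs[OF 1(2)] 2(1)] Rt[OF Rs[OF 1(1)] 2(2)] by auto
        then show False using nz unfolding sees_def by blast
      qed
    qed
  qed
  then show ?thesis unfolding primeW_def using c3 by blast
qed


definition QA :: "'a set" where "QA = {z. z \<in> V \<and> z \<notin> X \<and> \<not> inA z}"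
definition SA :: "'a \<Rightarrow> 'a \<Rightarrow> 'a set" where "SA b u = {z \<in> QA. \<not> sees b u z}"

lemma inA_X: "inA u \<Longrightarrow> u \<notin> X \<and> u \<in> V" unfolding inA_def by blast

lemma F1A:
  assumes b: "b \<in> X" and u: "inA u" and z: "z \<in> SA b u" and y: "inA y" and yu: "y \<noteq> u"
  shows "(sees b y u \<and> z \<notin> SA b y) \<or> (sty b y u \<and> nd z y u)"
proof -
  have z': "z \<in> V" "z \<notin> X" "\<not> inA z" "\<not> sees b u z" using z unfolding SA_def QA_def by auto
  have pZ: "primeW R (X \<union> {u,z})" using A_prime[OF b u z'] .
  have yZ: "y \<notin> X \<union> {u,z}" using y yu z'(3) inA_X[OF y] by auto
  have uz: "u \<noteq> z" using u z'(3) by blast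
  have "{u,z,y} \<subseteq> V - X" using inA_X[OF u] inA_X[OF y] z' by auto
  moreover have "card {u,z,y} = 3" using uz yu yZ by auto
  ultimately have "\<not> primeW R (X \<union> {u,z,y})" using S3W by blast
  moreover have "X \<union> {u,z,y} = X \<union> {u,z} \<union> {y}" by blast
  ultimately have np: "\<not> primeW R (X \<union> {u,z} \<union> {y})" by simp
  from tricho[OF pZ yZ np] show ?thesis
  proof (elim disjE bexE)
    assume m: "modl R (X \<union> {u,z} \<union> {y}) (X \<union> {u,z})"
    have 1: "((u,y),(b,y)) \<in> R \<and> ((y,u),(y,b)) \<in> R" using modl_out[OF m, of u b y] b yZ by blast
    have 2: "((z,y),(b,y)) \<in> R \<and> ((y,z),(y,b)) \<in> R" using modl_out[OF m, of z b y] b yZ by blast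
    have "sees b y u" using 1 unfolding sees_def by blast
    moreover have "z \<notin> SA b y" using 2 unfolding sees_def SA_def by blast
    ultimately show ?thesis by blast
  next
    fix g assume g: "g \<in> X \<union> {u,z}" and m: "modl R (X \<union> {u,z} \<union> {y}) {g,y}"
    have gy: "g \<noteq> y" using g yZ by blast
    consider "g \<in> X" | "g = u" | "g = z" using g by blast
    then show ?thesis
    proof cases
      case 1
      have "\<forall>w\<in>X-{g}. ((g,w),(y,b)) \<in> R \<and> ((w,g),(b,y)) \<in> R"
      proof
        fix w assume w: "w \<in> X-{g}"
        then have wn: "w \<notin> {g,y}" "w \<in> X \<union> {u,z} \<union> {y}" using yZ by auto
        have h1: "((g,w),(y,w)) \<in> R" "((w,g),(w,y)) \<in> R" using modl_out[OF m, of g y w] wn by auto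
        have h2: "((y,w),(y,b)) \<in> R" "((w,y),(b,y)) \<in> R" using inA_unif[OF y _ b, of w] w by auto
        show "((g,w),(y,b)) \<in> R \<and> ((w,g),(b,y)) \<in> R" using Rt[OF h1(1) h2(1)] Rt[OF h1(2) h2(2)] by blast
      qed
      then show ?thesis using G4[OF 1] by blast
    next
      case 2
      have bn: "b \<notin> {g,y}" "b \<in> X \<union> {u,z} \<union> {y}" "z \<notin> {g,y}" "z \<in> X \<union> {u,z} \<union> {y}"
        using b 2 yZ uz inA_X[OF u] by auto
      have h1: "((u,b),(y,b)) \<in> R" "((b,u),(b,y)) \<in> R" using modl_out[OF m, of g y b] bn 2 by auto
      have h2: "((u,z),(y,z)) \<in> R" "((z,u),(z,y)) \<in> R" using modl_out[OF m, of g y z] bn 2 by auto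
      have "sty b y u" unfolding sty_def using Rs[OF h1(1)] Rs[OF h1(2)] by blast
      moreover have "nd z y u" unfolding nd_def using Rs[OF h2(1)] Rs[OF h2(2)] by blast
      ultimately show ?thesis by blast
    next
      case 3
      have h: "\<forall>w\<in>X. ((z,w),(y,w)) \<in> R \<and> ((w,z),(w,y)) \<in> R"
      proof
        fix w assume w: "w \<in> X"
        then have wn: "w \<notin> {g,y}" "w \<in> X \<union> {u,z} \<union> {y}" using yZ 3 z'(2) by auto
        show "((z,w),(y,w)) \<in> R \<and> ((w,z),(w,y)) \<in> R" using modl_out[OF m, of g y w] wn 3 by auto
      qed
      have "inA z" unfolding inA_def
      proof (intro conjI ballI)
        fix x x' assume xx: "x \<in> X" "x' \<in> X"
        have "((x,z),(x,y)) \<in> R" using h xx by blast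
        moreover have "((x,y),(x',y)) \<in> R" using y xx unfolding inA_def by blast
        moreover have "((x',y),(x',z)) \<in> R" using h xx Rs by blast
        ultimately show "((x,z),(x',z)) \<in> R" using R3 by blast
        have "((z,x),(y,x)) \<in> R" using h xx by blast
        moreover have "((y,x),(y,x')) \<in> R" using y xx unfolding inA_def by blast
        moreover have "((y,x'),(z,x')) \<in> R" using h xx Rs by blast
        ultimately show "((z,x),(z,x')) \<in> R" using R3 by blast
      qed (use z' in auto)
      then show ?thesis using z' by blast
    qed
  qed
qed

lemma H5A:
  assumes "z \<in> SA b u" "nd z y u" "sty b y u" shows "z \<in> SA b y"
proof -
  have z: "z \<in> QA" "\<not> sees b u z" using assms(1) unfolding SA_def by auto
  have "\<not> sees b y z"
  proof
    assume sy: "sees b y z"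
    have n: "((y,z),(u,z)) \<in> R" "((z,y),(z,u)) \<in> R" using assms(2) unfolding nd_def by auto
    have st: "((y,b),(u,b)) \<in> R" "((b,y),(b,u)) \<in> R" using assms(3) unfolding sty_def by auto
    have w: "((y,z),(y,b)) \<in> R" "((z,y),(b,y)) \<in> R" using sy unfolding sees_def by auto
    have "((u,z),(u,b)) \<in> R" using R3[OF Rs[OF n(1)] w(1) st(1)] .
    moreover have "((z,u),(b,u)) \<in> R" using R3[OF Rs[OF n(2)] w(2) st(2)] .
    ultimately show False using z(2) unfolding sees_def by blast
  qed
  then show ?thesis using z(1) unfolding SA_def by blast
qed

lemma L1A: assumes b: "b \<in> X" and u0: "inA u0" shows "SA b u0 \<noteq> {}"
proof
  assume e0: "SA b u0 = {}"
  define C where "C = {c. inA c \<and> SA b c = {}}"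
  have K: "sees b c m" if c: "c \<in> C" and m: "m \<in> V" "m \<notin> C" for c m
  proof -
    have cA: "inA c" "SA b c = {}" using c unfolding C_def by auto
    consider "m \<in> X" | "inA m" | "m \<in> QA" using m unfolding QA_def by blast
    then show ?thesis
    proof cases
      case 1 then show ?thesis using inA_unif[OF cA(1) 1 b] unfolding sees_def by blast
    next
      case 2
      then have "SA b m \<noteq> {}" using m unfolding C_def by blast
      then obtain z where z: "z \<in> SA b m" by blast
      have cm: "c \<noteq> m" using c m by blast
      from F1A[OF b 2 z cA(1) cm] show ?thesis
      proof
        assume "sty b c m \<and> nd z c m"
        then have "z \<in> SA b c" using H5A[OF z] by blast
        then show ?thesis using cA by blast
      qed blast
    next
      case 3 then show ?thesis using cA(2) unfolding SA_def by blast
    qed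
  qed
  have "modl R V (V - C)"
  proof -
    have "\<forall>x\<in>V - C. \<forall>y\<in>V - C. \<forall>c\<in>V - (V - C). ((x,c),(y,c)) \<in> R \<and> ((c,x),(c,y)) \<in> R"
    proof (intro ballI)
      fix x y c assume xy: "x \<in> V - C" "y \<in> V - C" and c: "c \<in> V - (V - C)"
      then have "c \<in> C" by blast
      then have k1: "sees b c x" "sees b c y" using K xy by auto
      then show "((x,c),(y,c)) \<in> R \<and> ((c,x),(c,y)) \<in> R" unfolding sees_def using Rt Rs by blast
    qed
    then show ?thesis unfolding modl_def by blast
  qed
  moreover obtain x1 x2 where "x1 \<in> X" "x2 \<in> X" "x1 \<noteq> x2" using card3_other2[OF X3, of b] by blast
  moreover have "X \<subseteq> V - C" using XV unfolding C_def inA_def by blast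
  moreover have "u0 \<in> C" "u0 \<in> V" using u0 e0 inA_X[OF u0] unfolding C_def by auto
  ultimately show False using primeW_nt[OF pVW, of "V - C" x1 x2 u0] by blast
qed

lemma H4A: assumes "inA c1" "inA c2" "sty b c1 c2" "z \<in> QA" "z \<notin> SA b c1" "z \<notin> SA b c2"
  shows "nd z c1 c2"
proof -
  have "sees b c1 z" "sees b c2 z" using assms(4-6) unfolding SA_def by auto
  then show ?thesis using assms(3) unfolding sees_def sty_def nd_def using R3 Rs by meson
qed

lemma H3A: assumes b: "b \<in> X" and C: "C \<subseteq> {u. inA u}" "c1 \<in> C" "c2 \<in> C" "c1 \<noteq> c2"
  and h: "\<forall>x\<in>C. \<forall>y\<in>C. sty b x y \<and> (\<forall>z\<in>QA. nd z x y) \<and> (\<forall>a. inA a \<and> a \<notin> C \<longrightarrow> nd a x y)"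
  shows False
proof -
  have "\<forall>x\<in>C. \<forall>y\<in>C. \<forall>v\<in>V - C. ((x,v),(y,v)) \<in> R \<and> ((v,x),(v,y)) \<in> R"
  proof (intro ballI)
    fix x y v assume xy: "x \<in> C" "y \<in> C" and v: "v \<in> V - C"
    have xA: "inA x" "inA y" using xy C by auto
    consider "v \<in> X" | "inA v" | "v \<in> QA" using v unfolding QA_def by blast
    then show "((x,v),(y,v)) \<in> R \<and> ((v,x),(v,y)) \<in> R"
    proof cases
      case 1
      have "((x,v),(x,b)) \<in> R" "((v,x),(b,x)) \<in> R" "((y,v),(y,b)) \<in> R" "((v,y),(b,y)) \<in> R"
        using inA_unif[OF xA(1) 1 b] inA_unif[OF xA(2) 1 b] by auto
      moreover have "((x,b),(y,b)) \<in> R" "((b,x),(b,y)) \<in> R" using h xy unfolding sty_def by auto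
      ultimately show ?thesis using R3 Rs by meson
    next
      case 2 then show ?thesis using h xy v unfolding nd_def by blast
    next
      case 3 then show ?thesis using h xy unfolding nd_def by blast
    qed
  qed
  then have "modl R V C" using C inA_X unfolding modl_def by blast
  moreover have "b \<in> V - C" using b XV C inA_X by blast
  ultimately show False using primeW_nt[OF pVW _ C(2,3,4), of b] by blast
qed


definition QB :: "'a \<Rightarrow> 'a set" where "QB a = {z. z \<in> V \<and> z \<notin> X \<and> \<not> inB a z}"
definition SB :: "'a \<Rightarrow> 'a \<Rightarrow> 'a set" where "SB a u = {z \<in> QB a. \<not> nd z u a}"

lemma inB_X: "inB a u \<Longrightarrow> u \<notin> X \<and> u \<in> V" unfolding inB_def by blast
lemma inB_w: "inB a u \<Longrightarrow> w \<in> X \<Longrightarrow> w \<noteq> a \<Longrightarrow> ((a,w),(u,w)) \<in> R \<and> ((w,a),(w,u)) \<in> R"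
  unfolding inB_def by blast

lemma inB_I: assumes "z \<in> V" "z \<notin> X" "\<And>w. w \<in> X \<Longrightarrow> w \<noteq> a \<Longrightarrow> ((a,w),(z,w)) \<in> R \<and> ((w,a),(w,z)) \<in> R"
  shows "inB a z" unfolding inB_def using assms by blast

lemma B_prime:
  assumes a: "a \<in> X" and u: "inB a u" and z: "z \<in> V" "z \<notin> X" "\<not> inB a z" and nz: "\<not> nd z u a"
  shows "primeW R (X \<union> {u,z})"
proof -
  have uz: "u \<noteq> z" using u z by blast
  have uX: "u \<notin> X" "u \<in> V" using inB_X[OF u] by auto
  have c3: "card_ge 3 (X \<union> {u,z})" by (rule card_ge_mono[OF X3]) blast
  have "M = {} \<or> M = X \<union> {u,z} \<or> (\<exists>x. M = {x})" if M: "modl R (X \<union> {u,z}) M" for M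
  proof (rule ccontr)
    assume "\<not> ?thesis"
    then have nt: "M \<noteq> {}" "M \<noteq> X \<union> {u,z}" "\<forall>x. M \<noteq> {x}" by auto
    have MW: "M \<subseteq> X \<union> {u,z}" using M unfolding modl_def by simp
    have MX: "modl R X (M \<inter> X)" by (rule modl_restr[OF M]) blast
    have ndc: False if "u \<in> M" "a \<in> M" "z \<notin> M"
    proof -
      have "((a,z),(u,z)) \<in> R \<and> ((z,a),(z,u)) \<in> R" using modl_out[OF M, of a u z] that by blast
      then have "nd z u a" unfolding nd_def using Rs by blast
      then show False using nz by blast
    qed
    have zB: False if "a \<in> M" "z \<in> M" "\<forall>w\<in>X-{a}. w \<notin> M"
    proof -
      have "inB a z"
      proof (rule inB_I[OF z(1,2)])
        fix w assume "w \<in> X" "w \<noteq> a"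
        then show "((a,w),(z,w)) \<in> R \<and> ((w,a),(w,z)) \<in> R" using modl_out[OF M, of a z w] that by blast
      qed
      then show False using z by blast
    qed
    from primeW_triv[OF pXW MX] show False
    proof (elim disjE exE)
      assume e: "M \<inter> X = {}"
      have "u \<in> M"
      proof (rule ccontr)
        assume "u \<notin> M" then have "M \<subseteq> {z}" using MW e by blast
        then have "M = {} \<or> M = {z}" by (metis subset_singletonD)
        then show False using nt by simp
      qed
      moreover have "z \<in> M"
      proof (rule ccontr)
        assume "z \<notin> M" then have "M \<subseteq> {u}" using MW e by blast
        then have "M = {} \<or> M = {u}" by (metis subset_singletonD)
        then show False using nt by simp
      qed
      ultimately have h: "\<forall>w\<in>X. ((u,w),(z,w)) \<in> R \<and> ((w,u),(w,z)) \<in> R"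
        using modl_out[OF M] e by blast
      have "inB a z"
      proof (rule inB_I[OF z(1,2)])
        fix w assume w: "w \<in> X" "w \<noteq> a"
        then show "((a,w),(z,w)) \<in> R \<and> ((w,a),(w,z)) \<in> R" using inB_w[OF u w] h Rt by blast
      qed
      then show False using z by blast
    next
      assume e: "M \<inter> X = X"
      show False
      proof (cases "u \<in> M")
        case False
        have "\<forall>w\<in>X-{a}. ((a,w),(u,a)) \<in> R \<and> ((w,a),(a,u)) \<in> R"
        proof
          fix w assume w: "w \<in> X-{a}"
          have 1: "((a,w),(u,w)) \<in> R" "((w,a),(w,u)) \<in> R" using inB_w[OF u, of w] w by auto
          have 2: "((w,u),(a,u)) \<in> R" "((u,w),(u,a)) \<in> R" using modl_out[OF M, of w a u] e False w a uX by auto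
          show "((a,w),(u,a)) \<in> R \<and> ((w,a),(a,u)) \<in> R" using Rt[OF 1(1) 2(2)] Rt[OF 1(2) 2(1)] by blast
        qed
        then show False using G4[OF a] by blast
      next
        case True
        show False
        proof (cases "z \<in> M")
          case True2: True
          then have "X \<union> {u,z} \<subseteq> M" using True e by blast
          then show False using MW nt by blast
        next
          case False
          then show False using ndc True e a by blast
        qed
      qed
    next
      fix x assume e: "M \<inter> X = {x}"
      then have x: "x \<in> X" "x \<in> M" by auto
      have wout: "\<forall>w\<in>X-{x}. w \<notin> M" using e by blast
      show False
      proof (cases "u \<in> M")
        case True
        show False
        proof (cases "x = a")
          case True2: True
          show False
          proof (cases "z \<in> M")
            case True3: True
            then show False using zB x True2 wout by blast
          next
            case False
            then show False using ndc True x True2 by blast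
          qed
        next
          case False
          have "\<forall>w\<in>X-{x,a}. ((x,w),(a,w)) \<in> R \<and> ((w,x),(w,a)) \<in> R"
          proof
            fix w assume w: "w \<in> X-{x,a}"
            have 1: "((x,w),(u,w)) \<in> R" "((w,x),(w,u)) \<in> R" using modl_out[OF M, of x u w] w x True wout by auto
            have 2: "((a,w),(u,w)) \<in> R" "((w,a),(w,u)) \<in> R" using inB_w[OF u, of w] w by auto
            show "((x,w),(a,w)) \<in> R \<and> ((w,x),(w,a)) \<in> R" using Rt[OF 1(1) Rs[OF 2(1)]] Rt[OF 1(2) Rs[OF 2(2)]] by blast
          qed
          then show False using G5[OF x(1) a False] by blast
        qed
      next
        case False
        have zM: "z \<in> M"
        proof (rule ccontr)
          assume "z \<notin> M" then have "M = {x}" using MW e False by blast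
          then show False using nt by simp
        qed
        show False
        proof (cases "x = a")
          case True
          then show False using zB x zM wout by blast
        next
          case xa: False
          have 1: "((x,u),(z,u)) \<in> R" "((u,x),(u,z)) \<in> R" using modl_out[OF M, of x z u] x zM False uX by auto
          have 2: "((a,x),(u,x)) \<in> R" "((x,a),(x,u)) \<in> R" using inB_w[OF u x(1) xa] by auto
          have 3: "((x,a),(z,a)) \<in> R" "((a,x),(a,z)) \<in> R" using modl_out[OF M, of x z a] x zM a wout xa by auto
          have "((u,z),(a,z)) \<in> R" using R3[OF Rs[OF 1(2)] Rs[OF 2(1)] 3(2)] .
          moreover have "((z,u),(z,a)) \<in> R" using R3[OF Rs[OF 1(1)] Rs[OF 2(2)] 3(1)] .
          ultimately show False using nz unfolding nd_def by blast
        qed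
      qed
    qed
  qed
  then show ?thesis unfolding primeW_def using c3 by blast
qed

lemma F1B:
  assumes a: "a \<in> X" and u: "inB a u" and z: "z \<in> SB a u" and y: "inB a y" and yu: "y \<noteq> u"
  shows "(sees a u y \<and> z \<notin> SB a y) \<or> (sty a y u \<and> nd z y u)"
proof -
  have z': "z \<in> V" "z \<notin> X" "\<not> inB a z" "\<not> nd z u a" using z unfolding SB_def QB_def by auto
  have pZ: "primeW R (X \<union> {u,z})" using B_prime[OF a u z'] .
  have yZ: "y \<notin> X \<union> {u,z}" using y yu z'(3) inB_X[OF y] by auto
  have uz: "u \<noteq> z" using u z'(3) by blast
  have "{u,z,y} \<subseteq> V - X" using inB_X[OF u] inB_X[OF y] z' by auto
  moreover have "card {u,z,y} = 3" using uz yu yZ by auto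
  ultimately have "\<not> primeW R (X \<union> {u,z,y})" using S3W by blast
  moreover have "X \<union> {u,z,y} = X \<union> {u,z} \<union> {y}" by blast
  ultimately have np: "\<not> primeW R (X \<union> {u,z} \<union> {y})" by simp
  from tricho[OF pZ yZ np] show ?thesis
  proof (elim disjE bexE)
    assume m: "modl R (X \<union> {u,z} \<union> {y}) (X \<union> {u,z})"
    have "\<forall>w\<in>X-{a}. ((a,w),(y,a)) \<in> R \<and> ((w,a),(a,y)) \<in> R"
    proof
      fix w assume w: "w \<in> X-{a}"
      have 1: "((a,w),(y,w)) \<in> R" "((w,a),(w,y)) \<in> R" using inB_w[OF y, of w] w by auto
      have 2: "((w,y),(a,y)) \<in> R" "((y,w),(y,a)) \<in> R" using modl_out[OF m, of w a y] w a yZ by auto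
      show "((a,w),(y,a)) \<in> R \<and> ((w,a),(a,y)) \<in> R" using Rt[OF 1(1) 2(2)] Rt[OF 1(2) 2(1)] by blast
    qed
    then show ?thesis using G4[OF a] by blast
  next
    fix g assume g: "g \<in> X \<union> {u,z}" and m: "modl R (X \<union> {u,z} \<union> {y}) {g,y}"
    have gy: "g \<noteq> y" using g yZ by blast
    consider "g \<in> X" "g \<noteq> a" | "g = a" | "g = u" | "g = z" using g by blast
    then show ?thesis
    proof cases
      case 1
      have "\<forall>w\<in>X-{g,a}. ((g,w),(a,w)) \<in> R \<and> ((w,g),(w,a)) \<in> R"
      proof
        fix w assume w: "w \<in> X-{g,a}"
        then have wn: "w \<notin> {g,y}" "w \<in> X \<union> {u,z} \<union> {y}" using yZ by auto
        have h1: "((g,w),(y,w)) \<in> R" "((w,g),(w,y)) \<in> R" using modl_out[OF m, of g y w] wn by auto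
        have h2: "((a,w),(y,w)) \<in> R" "((w,a),(w,y)) \<in> R" using inB_w[OF y, of w] w by auto
        show "((g,w),(a,w)) \<in> R \<and> ((w,g),(w,a)) \<in> R" using Rt[OF h1(1) Rs[OF h2(1)]] Rt[OF h1(2) Rs[OF h2(2)]] by blast
      qed
      then show ?thesis using G5[OF 1(1) a 1(2)] by blast
    next
      case 2
      have bn: "u \<notin> {g,y}" "u \<in> X \<union> {u,z} \<union> {y}" "z \<notin> {g,y}" "z \<in> X \<union> {u,z} \<union> {y}"
        using 2 a yZ uz inB_X[OF u] z'(2) yu by auto
      have h1: "((a,u),(y,u)) \<in> R" "((u,a),(u,y)) \<in> R" using modl_out[OF m, of g y u] bn 2 by auto
      have h2: "((a,z),(y,z)) \<in> R" "((z,a),(z,y)) \<in> R" using modl_out[OF m, of g y z] bn 2 by auto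
      have "sees a u y" unfolding sees_def using Rs[OF h1(1)] Rs[OF h1(2)] by blast
      moreover have "nd z y a" unfolding nd_def using Rs[OF h2(1)] Rs[OF h2(2)] by blast
      then have "z \<notin> SB a y" unfolding SB_def by blast
      ultimately show ?thesis by blast
    next
      case 3
      have bn: "a \<notin> {g,y}" "a \<in> X \<union> {u,z} \<union> {y}" "z \<notin> {g,y}" "z \<in> X \<union> {u,z} \<union> {y}"
        using a 3 yZ uz inB_X[OF u] by auto
      have h1: "((u,a),(y,a)) \<in> R" "((a,u),(a,y)) \<in> R" using modl_out[OF m, of g y a] bn 3 by auto
      have h2: "((u,z),(y,z)) \<in> R" "((z,u),(z,y)) \<in> R" using modl_out[OF m, of g y z] bn 3 by auto
      have "sty a y u" unfolding sty_def using Rs[OF h1(1)] Rs[OF h1(2)] by blast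
      moreover have "nd z y u" unfolding nd_def using Rs[OF h2(1)] Rs[OF h2(2)] by blast
      ultimately show ?thesis by blast
    next
      case 4
      have "inB a z"
      proof (rule inB_I[OF z'(1,2)])
        fix w assume w: "w \<in> X" "w \<noteq> a"
        then have wn: "w \<notin> {g,y}" "w \<in> X \<union> {u,z} \<union> {y}" using yZ 4 z'(2) by auto
        have h1: "((z,w),(y,w)) \<in> R" "((w,z),(w,y)) \<in> R" using modl_out[OF m, of g y w] wn 4 by auto
        have h2: "((a,w),(y,w)) \<in> R" "((w,a),(w,y)) \<in> R" using inB_w[OF y w] by auto
        show "((a,w),(z,w)) \<in> R \<and> ((w,a),(w,z)) \<in> R" using Rt[OF h2(1) Rs[OF h1(1)]] Rt[OF h2(2) Rs[OF h1(2)]] by blast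
      qed
      then show ?thesis using z' by blast
    qed
  qed
qed

lemma H5B: assumes "z \<in> SB a u" "nd z y u" shows "z \<in> SB a y"
proof -
  have z: "z \<in> QB a" "\<not> nd z u a" using assms(1) unfolding SB_def by auto
  have "\<not> nd z y a"
  proof
    assume "nd z y a"
    then have "nd z u a" using assms(2) unfolding nd_def using Rt Rs by blast
    then show False using z by blast
  qed
  then show ?thesis using z unfolding SB_def by blast
qed

lemma L1B: assumes a: "a \<in> X" and u0: "inB a u0" shows "SB a u0 \<noteq> {}"
proof
  assume e0: "SB a u0 = {}"
  define C where "C = {c. inB a c \<and> SB a c = {}}"
  have aV: "a \<in> V" using a XV by blast
  have K: "nd m c a" if c: "c \<in> C" and m: "m \<in> V" "m \<notin> C" "m \<noteq> a" for c m
  proof -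
    have cA: "inB a c" "SB a c = {}" using c unfolding C_def by auto
    consider "m \<in> X" | "inB a m" | "m \<in> QB a" using m unfolding QB_def by blast
    then show ?thesis
    proof cases
      case 1 then show ?thesis using inB_w[OF cA(1) 1 m(3)] Rs unfolding nd_def by blast
    next
      case 2
      then have "SB a m \<noteq> {}" using m unfolding C_def by blast
      then obtain z where z: "z \<in> SB a m" by blast
      have cm: "c \<noteq> m" using c m by blast
      from F1B[OF a 2 z cA(1) cm] show ?thesis
      proof
        assume "sty a c m \<and> nd z c m"
        then have "z \<in> SB a c" using H5B[OF z] by blast
        then show ?thesis using cA by blast
      next
        assume "sees a m c \<and> z \<notin> SB a c"
        then show ?thesis unfolding sees_def nd_def by blast
      qed
    next
      case 3 then show ?thesis using cA(2) unfolding SB_def by blast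
    qed
  qed
  have K2: "((x,v),(a,v)) \<in> R \<and> ((v,x),(v,a)) \<in> R" if x: "x \<in> C \<union> {a}" and v: "v \<in> V - (C \<union> {a})" for x v
  proof (cases "x = a")
    case True then show ?thesis using Rrefl[of a v] Rrefl[of v a] aV v by auto
  next
    case False then show ?thesis using K[of x v] x v unfolding nd_def by blast
  qed
  have "modl R V (C \<union> {a})"
  proof -
    have "\<forall>x\<in>C \<union> {a}. \<forall>y\<in>C \<union> {a}. \<forall>v\<in>V - (C \<union> {a}). ((x,v),(y,v)) \<in> R \<and> ((v,x),(v,y)) \<in> R"
    proof (intro ballI)
      fix x y v assume xy: "x \<in> C \<union> {a}" "y \<in> C \<union> {a}" and v: "v \<in> V - (C \<union> {a})"
      show "((x,v),(y,v)) \<in> R \<and> ((v,x),(v,y)) \<in> R" using K2[OF xy(1) v] K2[OF xy(2) v] Rt Rs by blast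
    qed
    moreover have "C \<subseteq> V" unfolding C_def using inB_X by blast
    ultimately show ?thesis unfolding modl_def using aV by blast
  qed
  moreover obtain w where w: "w \<in> X" "w \<noteq> a" using card3_other1[OF X3, of a a] by blast
  moreover have "w \<in> V - (C \<union> {a})" using w XV inB_X unfolding C_def by blast
  moreover have "u0 \<in> C \<union> {a}" "u0 \<noteq> a" using u0 e0 inB_X[OF u0] a unfolding C_def by auto
  ultimately show False using primeW_nt[OF pVW, of "C \<union> {a}" u0 a w] by blast
qed

lemma H4B: assumes "z \<in> QB a" "z \<notin> SB a c1" "z \<notin> SB a c2" shows "nd z c1 c2"
proof -
  have "nd z c1 a" "nd z c2 a" using assms unfolding SB_def by auto
  then show ?thesis unfolding nd_def using Rt Rs by blast
qed

lemma H3B: assumes a: "a \<in> X" and C: "C \<subseteq> {u. inB a u}" "c1 \<in> C" "c2 \<in> C" "c1 \<noteq> c2"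
  and h: "\<forall>x\<in>C. \<forall>y\<in>C. sty a x y \<and> (\<forall>z\<in>QB a. nd z x y) \<and> (\<forall>d. inB a d \<and> d \<notin> C \<longrightarrow> nd d x y)"
  shows False
proof -
  have "\<forall>x\<in>C. \<forall>y\<in>C. \<forall>v\<in>V - C. ((x,v),(y,v)) \<in> R \<and> ((v,x),(v,y)) \<in> R"
  proof (intro ballI)
    fix x y v assume xy: "x \<in> C" "y \<in> C" and v: "v \<in> V - C"
    have xA: "inB a x" "inB a y" using xy C by auto
    consider "v = a" | "v \<in> X" "v \<noteq> a" | "inB a v" | "v \<in> QB a" using v unfolding QB_def by blast
    then show "((x,v),(y,v)) \<in> R \<and> ((v,x),(v,y)) \<in> R"
    proof cases
      case 1 then show ?thesis using h xy unfolding sty_def by blast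
    next
      case 2
      then show ?thesis using inB_w[OF xA(1) 2] inB_w[OF xA(2) 2] Rt Rs by blast
    next
      case 3 then show ?thesis using h xy v unfolding nd_def by blast
    next
      case 4 then show ?thesis using h xy unfolding nd_def by blast
    qed
  qed
  then have "modl R V C" using C inB_X unfolding modl_def by blast
  moreover have "a \<in> V - C" using a XV C inB_X by blast
  ultimately show False using primeW_nt[OF pVW _ C(2,3,4), of a] by blast
qed


lemma cls_ex: "e \<in> Es \<sigma> \<Longrightarrow> \<exists>p0 \<in> dpairs V. e = R `` {p0}"
  unfolding Es_def quotient_def by blast
lemma cls_in: "e \<in> Es \<sigma> \<Longrightarrow> p \<in> e \<Longrightarrow> (p,q) \<in> R \<Longrightarrow> q \<in> e"
  using cls_ex Rt by blast
lemma cls_R: "e \<in> Es \<sigma> \<Longrightarrow> p \<in> e \<Longrightarrow> q \<in> e \<Longrightarrow> (p,q) \<in> R"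
  using cls_ex Rt Rs by blast
lemma cls_disj: "e \<in> Es \<sigma> \<Longrightarrow> f \<in> Es \<sigma> \<Longrightarrow> p \<in> e \<Longrightarrow> p \<in> f \<Longrightarrow> e = f"
proof -
  assume e: "e \<in> Es \<sigma>" and f: "f \<in> Es \<sigma>" and p: "p \<in> e" "p \<in> f"
  have "q \<in> e \<longleftrightarrow> q \<in> f" for q
    using cls_R[OF e p(1), of q] cls_R[OF f p(2), of q] cls_in[OF e p(1), of q] cls_in[OF f p(2), of q] by blast
  then show ?thesis by blast
qed
lemma cls_sub: "e \<in> Es \<sigma> \<Longrightarrow> e \<subseteq> dpairs V"
  using cls_ex Rd by blast

lemma sty_sym: "sty c y u \<Longrightarrow> sty c u y" unfolding sty_def using Rs by blast
lemma sty_trans: "sty c x y \<Longrightarrow> sty c y z \<Longrightarrow> sty c x z" unfolding sty_def using Rt by blast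
lemma sty_refl: "y \<in> V \<Longrightarrow> c \<in> V \<Longrightarrow> y \<noteq> c \<Longrightarrow> sty c y y" unfolding sty_def using Rrefl by auto
lemma nd_sym: "nd z y u \<Longrightarrow> nd z u y" unfolding nd_def using Rs by blast
lemma nd_refl: "y \<in> V \<Longrightarrow> z \<in> V \<Longrightarrow> y \<noteq> z \<Longrightarrow> nd z y y" unfolding nd_def using Rrefl by auto
lemma nd_s1: "sees c d x \<Longrightarrow> sees c d x' \<Longrightarrow> nd d x x'"
  unfolding sees_def nd_def using Rt Rs by blast
lemma nd_s2: "sees c x d \<Longrightarrow> sees c x' d \<Longrightarrow> sty c x x' \<Longrightarrow> nd d x x'"
proof -
  assume a: "sees c x d" "sees c x' d" "sty c x x'"
  have 1: "((x,d),(x,c)) \<in> R" "((d,x),(c,x)) \<in> R" "((x',d),(x',c)) \<in> R" "((d,x'),(c,x')) \<in> R"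
    "((x,c),(x',c)) \<in> R" "((c,x),(c,x')) \<in> R" using a unfolding sees_def sty_def by auto
  show ?thesis unfolding nd_def using R3[OF 1(1) 1(5) Rs[OF 1(3)]] R3[OF 1(2) 1(6) Rs[OF 1(4)]] by blast
qed


lemma EsW: "Es (induced \<sigma> W) = (\<lambda>x. R `` {x} \<inter> dpairs W) ` dpairs W"
proof -
  have "(R \<inter> (dpairs W \<times> dpairs W)) `` {x} = R `` {x} \<inter> dpairs W" if "x \<in> dpairs W" for x
    using that by blast
  then show ?thesis unfolding Es_def quotient_def by (auto simp: image_def)
qed

lemma restr_eq: "e \<in> Es \<sigma> \<Longrightarrow> restr e W = e \<inter> dpairs W"
  using cls_sub[of e] unfolding restr_def dpairs_def by blast

lemma class_of: "e \<in> Es \<sigma> \<Longrightarrow> x \<in> e \<Longrightarrow> R `` {x} = e"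
  using cls_in[of e x] cls_R[of e x] by blast

lemma const_W:
  assumes W: "W \<subseteq> V" and p: "p1 \<in> W" "p2 \<in> W" "p1 \<noteq> p2" and e: "e \<in> Es \<sigma>"
    and h: "\<forall>y\<in>W. \<forall>u\<in>W. y \<noteq> u \<longrightarrow> (y,u) \<in> e"
  shows "constant2 (induced \<sigma> W) \<and> Es (induced \<sigma> W) = {restr e W}"
proof -
  have sub: "dpairs W \<subseteq> e" using h unfolding dpairs_def by blast
  have "R `` {x} \<inter> dpairs W = e \<inter> dpairs W" if "x \<in> dpairs W" for x
    using class_of[OF e] sub that by blast
  moreover have ne: "(p1,p2) \<in> dpairs W" using p unfolding dpairs_def by blast
  ultimately have "Es (induced \<sigma> W) = {e \<inter> dpairs W}" unfolding EsW by blast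
  then show ?thesis using restr_eq[OF e] unfolding constant2_def by simp
qed

lemma lin_W:
  assumes W: "W \<subseteq> V" and p: "p1 \<in> W" "p2 \<in> W" "p1 \<noteq> p2" and e: "e \<in> Es \<sigma>" and f: "f \<in> Es \<sigma>" and ef: "e \<noteq> f"
    and h: "\<forall>y\<in>W. \<forall>u\<in>W. y \<noteq> u \<longrightarrow> ((y,u) \<in> e \<and> (u,y) \<in> f) \<or> ((y,u) \<in> f \<and> (u,y) \<in> e)"
    and tr: "\<forall>p q r. (p \<in> W \<and> q \<in> W \<and> p \<noteq> q \<and> (p,q) \<in> e \<and> (q,p) \<in> f) \<longrightarrow>
                (q \<in> W \<and> r \<in> W \<and> q \<noteq> r \<and> (q,r) \<in> e \<and> (r,q) \<in> f) \<longrightarrow>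
                (p \<in> W \<and> r \<in> W \<and> p \<noteq> r \<and> (p,r) \<in> e \<and> (r,p) \<in> f)"
  shows "linear2 (induced \<sigma> W) \<and> Es (induced \<sigma> W) = {restr e W, restr f W}"
proof -
  have dis: "x \<in> e \<Longrightarrow> x \<in> f \<Longrightarrow> False" for x using cls_disj[OF e f] ef by blast
  have "R `` {x} \<inter> dpairs W \<in> {e \<inter> dpairs W, f \<inter> dpairs W}" if x: "x \<in> dpairs W" for x
  proof -
    obtain y u where "x = (y,u)" "y \<in> W" "u \<in> W" "y \<noteq> u" using x unfolding dpairs_def by blast
    then have "x \<in> e \<or> x \<in> f" using h by blast
    then show ?thesis using class_of[OF e, of x] class_of[OF f, of x] by blast
  qed
  moreover have "(p1,p2) \<in> dpairs W" "(p2,p1) \<in> dpairs W" using p unfolding dpairs_def by auto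
  moreover have "((p1,p2) \<in> e \<and> (p2,p1) \<in> f) \<or> ((p1,p2) \<in> f \<and> (p2,p1) \<in> e)" using h p by blast
  ultimately have EQ: "Es (induced \<sigma> W) = {e \<inter> dpairs W, f \<inter> dpairs W}" unfolding EsW
    using class_of[OF e] class_of[OF f] by blast
  have EQ2: "Es (induced \<sigma> W) = {restr e W, restr f W}" using EQ restr_eq[OF e] restr_eq[OF f] by simp
  have ne: "restr e W \<noteq> restr f W"
  proof
    assume a: "restr e W = restr f W"
    have "(p1,p2) \<in> restr e W \<or> (p1,p2) \<in> restr f W" using h p unfolding restr_def by blast
    then have "(p1,p2) \<in> e \<and> (p1,p2) \<in> f" using a unfolding restr_def by blast
    then show False using dis by blast
  qed
  define L where "L = {(v,w). v \<in> Vs (induced \<sigma> W) \<and> w \<in> Vs (induced \<sigma> W) \<and> v \<noteq> w \<and> (v,w) \<in> restr e W \<and> (w,v) \<in> restr f W}"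
  have Lc: "(v,w) \<in> L \<longleftrightarrow> (v \<in> W \<and> w \<in> W \<and> v \<noteq> w \<and> (v,w) \<in> e \<and> (w,v) \<in> f)" for v w
    unfolding L_def restr_def by auto
  have "trans L" unfolding trans_def using tr Lc by blast
  moreover have "irrefl L" unfolding irrefl_on_def using Lc by blast
  moreover have "total_on W L" unfolding total_on_def using Lc h by blast
  ultimately have "strict_linear_order_on W L" unfolding strict_linear_order_on_def by blast
  then have "linear2 (induced \<sigma> W)" unfolding linear2_def L_def using EQ2 ne by auto
  then show ?thesis using EQ2 by blast
qed
end

locale core = ctx +
  fixes D :: "'a set" and Q :: "'a set" and S :: "'a \<Rightarrow> 'a set" and c :: 'a and flip :: bool
  assumes Dsub: "D \<subseteq> V" and cV: "c \<in> V" and cD: "c \<notin> D" and QV: "Q \<subseteq> V" and QD: "Q \<inter> D = {}"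
    and F1: "\<And>u y z. u \<in> D \<Longrightarrow> y \<in> D \<Longrightarrow> y \<noteq> u \<Longrightarrow> z \<in> S u \<Longrightarrow>
        ((if flip then sees c u y else sees c y u) \<and> z \<notin> S y) \<or> (sty c y u \<and> nd z y u)"
    and L1: "\<And>u. u \<in> D \<Longrightarrow> S u \<noteq> {}"
    and H5: "\<And>u y z. u \<in> D \<Longrightarrow> y \<in> D \<Longrightarrow> z \<in> S u \<Longrightarrow> nd z y u \<Longrightarrow> sty c y u \<Longrightarrow> z \<in> S y"
    and H4: "\<And>c1 c2 z. c1 \<in> D \<Longrightarrow> c2 \<in> D \<Longrightarrow> sty c c1 c2 \<Longrightarrow> z \<in> Q \<Longrightarrow> z \<notin> S c1 \<Longrightarrow> z \<notin> S c2 \<Longrightarrow> nd z c1 c2"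
    and SQ: "\<And>u. u \<in> D \<Longrightarrow> S u \<subseteq> Q"
    and H3: "\<And>C c1 c2. C \<subseteq> D \<Longrightarrow> c1 \<in> C \<Longrightarrow> c2 \<in> C \<Longrightarrow> c1 \<noteq> c2 \<Longrightarrow>
        \<forall>x\<in>C. \<forall>y\<in>C. sty c x y \<and> (\<forall>z\<in>Q. nd z x y) \<and> (\<forall>d. d \<in> D \<and> d \<notin> C \<longrightarrow> nd d x y) \<Longrightarrow> False"
begin

definition P :: "'a \<Rightarrow> 'a \<Rightarrow> bool" where "P y u \<longleftrightarrow> (if flip then sees c u y else sees c y u)"

lemma R1: assumes "y \<in> D" "u \<in> D" "y \<noteq> u" "\<not> sty c y u" shows "sees c y u \<and> sees c u y"
proof -
  obtain z where z: "z \<in> S u" using L1[OF assms(2)] by blast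
  obtain z' where z': "z' \<in> S y" using L1[OF assms(1)] by blast
  have "P y u" using F1[OF assms(2,1,3) z] assms(4) unfolding P_def by blast
  moreover have "P u y" using F1[OF assms(1,2) _ z'] assms(3,4) sty_sym unfolding P_def by blast
  ultimately show ?thesis unfolding P_def by (cases flip) auto
qed

lemma R3: assumes "y \<in> D" "u \<in> D" "y \<noteq> u" "z \<in> S u" "z \<notin> S y" shows "P y u"
  using F1[OF assms(2,1,3,4)] H5[OF assms(2,1,4)] assms(5) unfolding P_def by blast

lemma PP1: "P d x \<Longrightarrow> P d x' \<Longrightarrow> sty c x x' \<Longrightarrow> nd d x x'"
  unfolding P_def by (cases flip) (auto intro: nd_s1 nd_s2)
lemma PP2: "P x d \<Longrightarrow> P x' d \<Longrightarrow> sty c x x' \<Longrightarrow> nd d x x'"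
  unfolding P_def by (cases flip) (auto intro: nd_s1 nd_s2)

lemma R2: assumes y: "y \<in> D" and u: "u \<in> D" and yu: "y \<noteq> u" and st: "sty c y u" shows "S y \<noteq> S u"
proof
  assume eq: "S y = S u"
  define C where "C = {x \<in> D. sty c x y \<and> S x = S y}"
  have CD: "C \<subseteq> D" unfolding C_def by blast
  have yC: "y \<in> C" unfolding C_def using y sty_refl[of y c] Dsub cV cD by auto
  have uC: "u \<in> C" unfolding C_def using u eq sty_sym[OF st] by auto
  have "\<forall>x\<in>C. \<forall>x'\<in>C. sty c x x' \<and> (\<forall>z\<in>Q. nd z x x') \<and> (\<forall>d. d \<in> D \<and> d \<notin> C \<longrightarrow> nd d x x')"
  proof (intro ballI conjI allI impI)
    fix x x' assume x: "x \<in> C" and x': "x' \<in> C"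
    have xD: "x \<in> D" "x' \<in> D" "sty c x y" "sty c x' y" "S x = S y" "S x' = S y" using x x' unfolding C_def by auto
    show sxx: "sty c x x'" using sty_trans[OF xD(3) sty_sym[OF xD(4)]] .
    {
      fix z assume z: "z \<in> Q"
      show "nd z x x'"
      proof (cases "x = x'")
        case True
        then show ?thesis using nd_refl[of x z] xD Dsub QV z QD by blast
      next
        case False
        show ?thesis
        proof (cases "z \<in> S x")
          case True
          then have "z \<in> S x'" using xD by simp
          then have "nd z x' x" using F1[OF xD(1,2) _ True] False by blast
          then show ?thesis using nd_sym by blast
        next
          case False2: False
          then have "z \<notin> S x'" using xD by simp
          then show ?thesis using H4[OF xD(1,2) sxx z False2] by blast
        qed
      qed
    }
    {
      fix d assume d: "d \<in> D \<and> d \<notin> C"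
      have dx: "d \<noteq> x" "d \<noteq> x'" using d x x' by auto
      show "nd d x x'"
      proof (cases "sty c d y")
        case False
        have "\<not> sty c d x" using False sty_trans[OF _ xD(3)] by blast
        moreover have "\<not> sty c d x'" using False sty_trans[OF _ xD(4)] by blast
        ultimately have "sees c d x" "sees c d x'" using R1[of d x] R1[of d x'] d xD dx by auto
        then show ?thesis using nd_s1 by blast
      next
        case True
        then have Sd: "S d \<noteq> S y" using d unfolding C_def by blast
        show ?thesis
        proof (cases "S y \<subseteq> S d")
          case False
          then obtain z where z: "z \<in> S y" "z \<notin> S d" by blast
          have "P d x" using R3[OF _ xD(1) dx(1)] z xD d by auto
          moreover have "P d x'" using R3[OF _ xD(2) dx(2)] z xD d by auto
          ultimately show ?thesis using PP1 sxx by blast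
        next
          case True
          then obtain z where z: "z \<in> S d" "z \<notin> S y" using Sd by blast
          have "P x d" using R3[OF xD(1) _ dx(1)[symmetric]] z xD d by auto
          moreover have "P x' d" using R3[OF xD(2) _ dx(2)[symmetric]] z xD d by auto
          ultimately show ?thesis using PP2 sxx by blast
        qed
      qed
    }
  qed
  then show False using H3[OF CD yC uC yu] by blast
qed

lemma sees_or: assumes "y \<in> D" "u \<in> D" "y \<noteq> u" shows "sees c y u \<or> sees c u y"
proof (cases "sty c y u")
  case False then show ?thesis using R1 assms by blast
next
  case True
  then have "S y \<noteq> S u" using R2 assms by blast
  then consider z where "z \<in> S u" "z \<notin> S y" | z where "z \<in> S y" "z \<notin> S u" by blast
  then show ?thesis
  proof cases
    case 1 then have "P y u" using R3 assms by blast
    then show ?thesis unfolding P_def by (cases flip) auto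
  next
    case 2 then have "P u y" using R3 assms by blast
    then show ?thesis unfolding P_def by (cases flip) auto
  qed
qed

lemma mono_S: assumes "y \<in> D" "u \<in> D" "y \<noteq> u" "sty c y u" "sees c y u" "\<not> sees c u y"
  shows "if flip then S u \<subset> S y else S y \<subset> S u"
proof -
  have ne: "S y \<noteq> S u" using R2 assms by blast
  show ?thesis
  proof (cases flip)
    case True
    have "S u \<subseteq> S y"
    proof
      fix z assume "z \<in> S u" show "z \<in> S y"
      proof (rule ccontr)
        assume "z \<notin> S y" then have "P y u" using R3 assms \<open>z \<in> S u\<close> by blast
        then show False using True assms(6) unfolding P_def by simp
      qed
    qed
    then show ?thesis using True ne by auto
  next
    case False
    have "S y \<subseteq> S u"
    proof
      fix z assume "z \<in> S y" show "z \<in> S u"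
      proof (rule ccontr)
        assume "z \<notin> S u" then have "P u y" using R3[of u y z] assms \<open>z \<in> S y\<close> by blast
        then show False using False assms(6) unfolding P_def by simp
      qed
    qed
    then show ?thesis using False ne by auto
  qed
qed


context
  fixes e f v
  assumes eE: "e \<in> Es \<sigma>" and fE: "f \<in> Es \<sigma>" and vD: "v \<in> D" and ve: "(v,c) \<in> e" and vf: "(c,v) \<in> f"
begin

lemma typD: assumes u: "u \<in> D" shows "((u,c) \<in> e \<and> (c,u) \<in> f) \<or> ((u,c) \<in> f \<and> (c,u) \<in> e)"
proof (cases "u = v")
  case True then show ?thesis using ve vf by blast
next
  case False
  show ?thesis
  proof (cases "sty c u v")
    case True
    then have "((u,c),(v,c)) \<in> R" "((c,u),(c,v)) \<in> R" unfolding sty_def by auto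
    then show ?thesis using cls_in[OF eE ve] cls_in[OF fE vf] Rs by blast
  next
    case False2: False
    have s: "sees c u v" "sees c v u" using R1[OF u vD False False2] by auto
    have 1: "((u,v),(u,c)) \<in> R" "((v,u),(c,u)) \<in> R" "((v,u),(v,c)) \<in> R" "((u,v),(c,v)) \<in> R"
      using s unfolding sees_def by auto
    have "(u,c) \<in> f" using cls_in[OF fE vf Rs[OF Rt[OF Rs[OF 1(1)] 1(4)]]] .
    moreover have "(c,u) \<in> e" using cls_in[OF eE ve Rs[OF Rt[OF Rs[OF 1(2)] 1(3)]]] .
    ultimately show ?thesis by blast
  qed
qed

lemma sees_cls: assumes y: "y \<in> D" and s: "sees c y u"
  shows "((y,u) \<in> e \<and> (u,y) \<in> f) \<or> ((y,u) \<in> f \<and> (u,y) \<in> e)"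
proof -
  have 1: "((y,u),(y,c)) \<in> R" "((u,y),(c,y)) \<in> R" using s unfolding sees_def by auto
  from typD[OF y] show ?thesis
  proof
    assume "(y,c) \<in> e \<and> (c,y) \<in> f"
    then show ?thesis using cls_in[OF eE _ Rs[OF 1(1)]] cls_in[OF fE _ Rs[OF 1(2)]] by blast
  next
    assume "(y,c) \<in> f \<and> (c,y) \<in> e"
    then show ?thesis using cls_in[OF fE _ Rs[OF 1(1)]] cls_in[OF eE _ Rs[OF 1(2)]] by blast
  qed
qed

lemma pairs: assumes "y \<in> D" "u \<in> D" "y \<noteq> u"
  shows "((y,u) \<in> e \<and> (u,y) \<in> f) \<or> ((y,u) \<in> f \<and> (u,y) \<in> e)"
  using sees_or[OF assms] sees_cls assms by blast

definition Lr :: "'a \<Rightarrow> 'a \<Rightarrow> bool" where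
  "Lr x y \<longleftrightarrow> x \<in> D \<and> y \<in> D \<and> x \<noteq> y \<and> (x,y) \<in> e \<and> (y,x) \<in> f"

context assumes ef: "e \<noteq> f"
begin

lemma dis: "x \<in> e \<Longrightarrow> x \<in> f \<Longrightarrow> False" using cls_disj[OF eE fE] ef by blast

lemma antis: "Lr x y \<Longrightarrow> Lr y x \<Longrightarrow> False" unfolding Lr_def using dis[of "(x,y)"] by blast

lemma cross: assumes x: "x \<in> D" "(x,c) \<in> e" and y: "y \<in> D" "(y,c) \<notin> e" shows "Lr x y"
proof -
  have xy: "x \<noteq> y" using x y by blast
  have yf: "(y,c) \<in> f" using typD[OF y(1)] y(2) by blast
  have "\<not> sty c x y"
  proof
    assume "sty c x y" then have "((x,c),(y,c)) \<in> R" unfolding sty_def by blast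
    then have "(y,c) \<in> e" using cls_in[OF eE x(2)] by blast
    then show False using y(2) by blast
  qed
  then have "sees c x y" using R1 x y xy by blast
  then have 1: "((x,y),(x,c)) \<in> R" "((y,x),(c,x)) \<in> R" unfolding sees_def by auto
  have "(c,x) \<in> f \<or> (x,c) \<in> f" using typD[OF x(1)] by blast
  then have cx: "(c,x) \<in> f" using dis[OF x(2)] by blast
  have "(x,y) \<in> e" using cls_in[OF eE x(2) Rs[OF 1(1)]] .
  moreover have "(y,x) \<in> f" using cls_in[OF fE cx Rs[OF 1(2)]] .
  ultimately show ?thesis unfolding Lr_def using x y xy by blast
qed

lemma same_sty: assumes "x \<in> D" "y \<in> D" "((x,c) \<in> e) = ((y,c) \<in> e)" shows "sty c x y"
proof (cases "(x,c) \<in> e")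
  case True
  then have "(y,c) \<in> e" using assms(3) by simp
  moreover have "(c,x) \<in> f"
  proof -
    have "(c,x) \<in> f \<or> (x,c) \<in> f" using typD[OF assms(1)] by blast
    then show ?thesis using dis[OF True] by blast
  qed
  moreover have "(c,y) \<in> f"
  proof -
    have "(c,y) \<in> f \<or> (y,c) \<in> f" using typD[OF assms(2)] by blast
    then show ?thesis using dis[OF \<open>(y,c) \<in> e\<close>] by blast
  qed
  ultimately show ?thesis unfolding sty_def using cls_R[OF eE True] cls_R[OF fE] by blast
next
  case False
  then have n: "(y,c) \<notin> e" using assms(3) by simp
  have "(x,c) \<in> f" "(c,x) \<in> e" using typD[OF assms(1)] False by auto
  moreover have "(y,c) \<in> f" "(c,y) \<in> e" using typD[OF assms(2)] n by auto
  ultimately show ?thesis unfolding sty_def using cls_R[OF eE] cls_R[OF fE] by blast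
qed

lemma edge: assumes L: "Lr x y" and same: "((x,c) \<in> e) = ((y,c) \<in> e)"
  shows "if ((x,c) \<in> e) = flip then S y \<subset> S x else S x \<subset> S y"
proof -
  have x: "x \<in> D" "y \<in> D" "x \<noteq> y" "(x,y) \<in> e" "(y,x) \<in> f" using L unfolding Lr_def by auto
  have st: "sty c x y" using same_sty[OF x(1,2) same] .
  show ?thesis
  proof (cases "(x,c) \<in> e")
    case True
    have "\<not> sees c y x"
    proof
      assume "sees c y x" then have "((y,x),(y,c)) \<in> R" unfolding sees_def by blast
      then have "(y,x) \<in> e" using cls_in[OF eE _ Rs] True same by blast
      then show False using x dis[of "(y,x)"] by blast
    qed
    then have "sees c x y" using sees_or x by blast
    then have "if flip then S y \<subset> S x else S x \<subset> S y" using mono_S[OF x(1,2,3) st] \<open>\<not> sees c y x\<close> by blast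
    then show ?thesis using True by (cases flip) auto
  next
    case False
    have fx: "(x,c) \<in> f" using typD[OF x(1)] False by blast
    have "\<not> sees c x y"
    proof
      assume "sees c x y" then have "((x,y),(x,c)) \<in> R" unfolding sees_def by blast
      then have "(x,y) \<in> f" using cls_in[OF fE fx Rs] by blast
      then show False using x dis[of "(x,y)"] by blast
    qed
    then have "sees c y x" using sees_or x by blast
    then have "if flip then S x \<subset> S y else S y \<subset> S x" using mono_S[OF x(2,1) x(3)[symmetric] sty_sym[OF st]] \<open>\<not> sees c x y\<close> by blast
    then show ?thesis using False by (cases flip) auto
  qed
qed

lemma Ltrans: assumes "Lr p q" "Lr q r" shows "Lr p r"
proof -
  have pq: "p \<in> D" "q \<in> D" "r \<in> D" using assms unfolding Lr_def by auto
  have pr: "p \<noteq> r"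
  proof
    assume "p = r" then show False using antis[OF assms(1)] assms(2) by simp
  qed
  show ?thesis
  proof (rule ccontr)
    assume nL: "\<not> Lr p r"
    have "((p,r) \<in> e \<and> (r,p) \<in> f) \<or> ((p,r) \<in> f \<and> (r,p) \<in> e)" using pairs[OF pq(1,3) pr] .
    then have "(r,p) \<in> e \<and> (p,r) \<in> f" using nL pq pr unfolding Lr_def by blast
    then have rp: "Lr r p" using pq pr unfolding Lr_def by blast
    have t1: "(q,c) \<in> e \<longrightarrow> (p,c) \<in> e"
    proof (rule impI, rule ccontr)
      assume "(q,c) \<in> e" "(p,c) \<notin> e" then have "Lr q p" using cross pq by blast
      then show False using antis[OF assms(1)] by blast
    qed
    have t2: "(r,c) \<in> e \<longrightarrow> (q,c) \<in> e"
    proof (rule impI, rule ccontr)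
      assume "(r,c) \<in> e" "(q,c) \<notin> e" then have "Lr r q" using cross pq by blast
      then show False using antis[OF assms(2)] by blast
    qed
    have t3: "(p,c) \<in> e \<longrightarrow> (r,c) \<in> e"
    proof (rule impI, rule ccontr)
      assume "(p,c) \<in> e" "(r,c) \<notin> e" then have "Lr p r" using cross pq by blast
      then show False using antis[OF rp] by blast
    qed
    have s1: "((p,c) \<in> e) = ((q,c) \<in> e)" "((q,c) \<in> e) = ((r,c) \<in> e)" "((r,c) \<in> e) = ((p,c) \<in> e)"
      using t1 t2 t3 by argo+
    have e1: "if ((p,c) \<in> e) = flip then S q \<subset> S p else S p \<subset> S q" using edge[OF assms(1) s1(1)] .
    have e2: "if ((q,c) \<in> e) = flip then S r \<subset> S q else S q \<subset> S r" using edge[OF assms(2) s1(2)] .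
    have e3: "if ((r,c) \<in> e) = flip then S p \<subset> S r else S r \<subset> S p" using edge[OF rp s1(3)] .
    show False
    proof (cases "((p,c) \<in> e) = flip")
      case True
      have c1: "((q,c) \<in> e) = flip" using True s1(1) by argo
      have c2: "((r,c) \<in> e) = flip" using True s1(3) by argo
      have x1: "S q \<subset> S p" using e1 unfolding if_P[OF True] .
      have x2: "S r \<subset> S q" using e2 unfolding if_P[OF c1] .
      have x3: "S p \<subset> S r" using e3 unfolding if_P[OF c2] .
      have "S p \<subset> S p" using psubset_trans[OF psubset_trans[OF x3 x2] x1] .
      then show False by (rule less_irrefl[THEN notE])
    next
      case False
      have c1: "((q,c) \<in> e) \<noteq> flip" using False s1(1) by argo
      have c2: "((r,c) \<in> e) \<noteq> flip" using False s1(3) by argo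
      have x1: "S p \<subset> S q" using e1 unfolding if_not_P[OF False] .
      have x2: "S q \<subset> S r" using e2 unfolding if_not_P[OF c1] .
      have x3: "S r \<subset> S p" using e3 unfolding if_not_P[OF c2] .
      have "S p \<subset> S p" using psubset_trans[OF psubset_trans[OF x1 x2] x3] .
      then show False by (rule less_irrefl[THEN notE])
    qed
  qed
qed

end
end

end
theorem lemma3p10:
  fixes \<sigma> :: "'a twostr" and X :: "'a set"
  assumes "is_2structure \<sigma>"
    and "X \<subset> Vs \<sigma>"
    and "prime2 (induced \<sigma> X)"
    and S3: "\<not> (\<exists>Y. Y \<subseteq> Vs \<sigma> - X \<and> card Y = 3 \<and> prime2 (induced \<sigma> (X \<union> Y)))"
    and "prime2 \<sigma>"
  shows "(\<forall>e\<in>Es \<sigma>.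
            (card_ge 2 (ext_set_ef \<sigma> X e e) \<longrightarrow>
               constant2 (induced \<sigma> (ext_set \<sigma> X)) \<and>
               Es (induced \<sigma> (ext_set \<sigma> X)) = {restr e (ext_set \<sigma> X)}) \<and>
            (\<forall>\<alpha>\<in>X. card_ge 2 (alpha_set_ef \<sigma> X \<alpha> e e) \<longrightarrow>
               constant2 (induced \<sigma> (alpha_set \<sigma> X \<alpha>)) \<and>
               Es (induced \<sigma> (alpha_set \<sigma> X \<alpha>)) = {restr e (alpha_set \<sigma> X \<alpha>)}))
       \<and> (\<forall>e\<in>Es \<sigma>. \<forall>f\<in>Es \<sigma>. e \<noteq> f \<longrightarrow>
            (card_ge 2 (ext_set_ef \<sigma> X e f) \<longrightarrow>
               linear2 (induced \<sigma> (ext_set \<sigma> X)) \<and>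
               Es (induced \<sigma> (ext_set \<sigma> X)) = {restr e (ext_set \<sigma> X), restr f (ext_set \<sigma> X)}) \<and>
            (\<forall>\<alpha>\<in>X. card_ge 2 (alpha_set_ef \<sigma> X \<alpha> e f) \<longrightarrow>
               linear2 (induced \<sigma> (alpha_set \<sigma> X \<alpha>)) \<and>
               Es (induced \<sigma> (alpha_set \<sigma> X \<alpha>)) = {restr e (alpha_set \<sigma> X \<alpha>), restr f (alpha_set \<sigma> X \<alpha>)}))"
proof -
  interpret ctx \<sigma> X using assms by unfold_locales
  have two2: "\<exists>v1 v2. v1 \<in> A \<and> v2 \<in> A \<and> v1 \<noteq> v2" if c2: "card_ge 2 A" for A :: "'a set"
  proof -
    obtain B where B: "B \<subseteq> A" "card B = 2" using c2 unfolding card_ge_def by blast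
    then obtain x y where "B = {x,y}" "x \<noteq> y" unfolding card_2_iff by blast
    then show ?thesis using B(1) by blast
  qed
  obtain b0 where b0: "b0 \<in> X" using X3 card3 by blast
  have coreA: "core \<sigma> X {u. inA u} QA (SA b0) b0 False"
  proof (unfold_locales)
    show "{u. inA u} \<subseteq> V" using inA_X by blast
    show "b0 \<in> V" using b0 XV by blast
    show "b0 \<notin> {u. inA u}" using b0 inA_X by blast
    show "QA \<subseteq> V" unfolding QA_def by blast
    show "QA \<inter> {u. inA u} = {}" unfolding QA_def by blast
  next
    fix u y z assume "u \<in> {u. inA u}" "y \<in> {u. inA u}" "y \<noteq> u" "z \<in> SA b0 u"
    then show "((if False then sees b0 u y else sees b0 y u) \<and> z \<notin> SA b0 y) \<or> (sty b0 y u \<and> nd z y u)"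
      using F1A[OF b0] by simp
  next
    fix u assume "u \<in> {u. inA u}" then show "SA b0 u \<noteq> {}" using L1A[OF b0] by simp
  next
    fix u y z assume "u \<in> {u. inA u}" "y \<in> {u. inA u}" "z \<in> SA b0 u" "nd z y u" "sty b0 y u"
    then show "z \<in> SA b0 y" using H5A by blast
  next
    fix c1 c2 z assume "c1 \<in> {u. inA u}" "c2 \<in> {u. inA u}" "sty b0 c1 c2" "z \<in> QA" "z \<notin> SA b0 c1" "z \<notin> SA b0 c2"
    then show "nd z c1 c2" using H4A by simp
  next
    fix u show "SA b0 u \<subseteq> QA" unfolding SA_def by blast
  next
    fix C c1 c2 assume "C \<subseteq> {u. inA u}" "c1 \<in> C" "c2 \<in> C" "c1 \<noteq> c2"
      "\<forall>x\<in>C. \<forall>y\<in>C. sty b0 x y \<and> (\<forall>z\<in>QA. nd z x y) \<and> (\<forall>d. d \<in> {u. inA u} \<and> d \<notin> C \<longrightarrow> nd d x y)"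
    then show False using H3A[OF b0, of C c1 c2] by simp
  qed
  have Bint: "core \<sigma> X {u. inB a u} (QB a) (SB a) a True" if a: "a \<in> X" for a
  proof (unfold_locales)
    show "{u. inB a u} \<subseteq> V" using inB_X by blast
    show "a \<in> V" using a XV by blast
    show "a \<notin> {u. inB a u}" using a inB_X by blast
    show "QB a \<subseteq> V" unfolding QB_def by blast
    show "QB a \<inter> {u. inB a u} = {}" unfolding QB_def by blast
  next
    fix u y z assume "u \<in> {u. inB a u}" "y \<in> {u. inB a u}" "y \<noteq> u" "z \<in> SB a u"
    then show "((if True then sees a u y else sees a y u) \<and> z \<notin> SB a y) \<or> (sty a y u \<and> nd z y u)"
      using F1B[OF a] by simp
  next
    fix u assume "u \<in> {u. inB a u}" then show "SB a u \<noteq> {}" using L1B[OF a] by simp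
  next
    fix u y z assume "u \<in> {u. inB a u}" "y \<in> {u. inB a u}" "z \<in> SB a u" "nd z y u" "sty a y u"
    then show "z \<in> SB a y" using H5B by blast
  next
    fix c1 c2 z assume "c1 \<in> {u. inB a u}" "c2 \<in> {u. inB a u}" "sty a c1 c2" "z \<in> QB a" "z \<notin> SB a c1" "z \<notin> SB a c2"
    then show "nd z c1 c2" using H4B by simp
  next
    fix u show "SB a u \<subseteq> QB a" unfolding SB_def by blast
  next
    fix C c1 c2 assume "C \<subseteq> {u. inB a u}" "c1 \<in> C" "c2 \<in> C" "c1 \<noteq> c2"
      "\<forall>x\<in>C. \<forall>y\<in>C. sty a x y \<and> (\<forall>z\<in>QB a. nd z x y) \<and> (\<forall>d. d \<in> {u. inB a u} \<and> d \<notin> C \<longrightarrow> nd d x y)"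
    then show False using H3B[OF a, of C c1 c2] by simp
  qed
  have DV: "{u. inA u} \<subseteq> V" using inA_X by blast
  have DVB: "{u. inB a u} \<subseteq> V" for a using inB_X by blast
  have gen: "(card_ge 2 {v \<in> D. (v,c) \<in> e \<and> (c,v) \<in> f} \<longrightarrow>
        (e = f \<longrightarrow> constant2 (induced \<sigma> D) \<and> Es (induced \<sigma> D) = {restr e D}) \<and>
        (e \<noteq> f \<longrightarrow> linear2 (induced \<sigma> D) \<and> Es (induced \<sigma> D) = {restr e D, restr f D}))"
    if cr: "core \<sigma> X D Q S c flip" and eE: "e \<in> Es \<sigma>" and fE: "f \<in> Es \<sigma>" for D Q S c flip e f
  proof
    interpret C: core \<sigma> X D Q S c flip using cr .
    assume "card_ge 2 {v \<in> D. (v,c) \<in> e \<and> (c,v) \<in> f}"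
    then obtain v1 v2 where v: "v1 \<in> D" "v2 \<in> D" "v1 \<noteq> v2" "(v1,c) \<in> e" "(c,v1) \<in> f"
      using two2 by blast
    have pr: "((y,u) \<in> e \<and> (u,y) \<in> f) \<or> ((y,u) \<in> f \<and> (u,y) \<in> e)" if "y \<in> D" "u \<in> D" "y \<noteq> u" for y u
      using C.pairs[OF eE fE v(1,4,5) that] .
    show "(e = f \<longrightarrow> constant2 (induced \<sigma> D) \<and> Es (induced \<sigma> D) = {restr e D}) \<and>
        (e \<noteq> f \<longrightarrow> linear2 (induced \<sigma> D) \<and> Es (induced \<sigma> D) = {restr e D, restr f D})"
    proof (rule conjI; rule impI)
      assume "e = f"
      then show "constant2 (induced \<sigma> D) \<and> Es (induced \<sigma> D) = {restr e D}"
        using const_W[OF C.Dsub v(1,2,3) eE] pr by blast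
    next
      assume ef: "e \<noteq> f"
      have tr: "\<forall>p q r. (p \<in> D \<and> q \<in> D \<and> p \<noteq> q \<and> (p,q) \<in> e \<and> (q,p) \<in> f) \<longrightarrow>
                (q \<in> D \<and> r \<in> D \<and> q \<noteq> r \<and> (q,r) \<in> e \<and> (r,q) \<in> f) \<longrightarrow>
                (p \<in> D \<and> r \<in> D \<and> p \<noteq> r \<and> (p,r) \<in> e \<and> (r,p) \<in> f)"
        using C.Ltrans[OF eE fE v(1,4,5) ef] unfolding C.Lr_def[OF eE fE v(1,4,5)] by blast
      show "linear2 (induced \<sigma> D) \<and> Es (induced \<sigma> D) = {restr e D, restr f D}"
        using lin_W[OF C.Dsub v(1,2,3) eE fE ef _ tr] pr by blast
    qed
  qed
  have extA: "ext_set_ef \<sigma> X e f = {v \<in> {u. inA u}. (v,b0) \<in> e \<and> (b0,v) \<in> f}"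
    if eE: "e \<in> Es \<sigma>" and fE: "f \<in> Es \<sigma>" for e f
  proof -
    have "(\<forall>\<beta>\<in>X. (v,\<beta>) \<in> e \<and> (\<beta>,v) \<in> f) \<longleftrightarrow> (v,b0) \<in> e \<and> (b0,v) \<in> f" if v: "inA v" for v
    proof
      assume "\<forall>\<beta>\<in>X. (v,\<beta>) \<in> e \<and> (\<beta>,v) \<in> f" then show "(v,b0) \<in> e \<and> (b0,v) \<in> f" using b0 by blast
    next
      assume h: "(v,b0) \<in> e \<and> (b0,v) \<in> f"
      show "\<forall>\<beta>\<in>X. (v,\<beta>) \<in> e \<and> (\<beta>,v) \<in> f"
      proof
        fix \<beta> assume be: "\<beta> \<in> X"
        have 1: "((v,\<beta>),(v,b0)) \<in> R" "((\<beta>,v),(b0,v)) \<in> R" using inA_unif[OF v be b0] by auto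
        show "(v,\<beta>) \<in> e \<and> (\<beta>,v) \<in> f" using cls_in[OF eE _ Rs[OF 1(1)]] cls_in[OF fE _ Rs[OF 1(2)]] h by blast
      qed
    qed
    then show ?thesis unfolding ext_set_ef_def ext_set_eq by blast
  qed
  have extB: "alpha_set_ef \<sigma> X a e f = {v \<in> {u. inB a u}. (v,a) \<in> e \<and> (a,v) \<in> f}" if a: "a \<in> X" for a e f
    unfolding alpha_set_ef_def alpha_set_eq[OF a] by blast
  have GA: "(card_ge 2 (ext_set_ef \<sigma> X e f) \<longrightarrow>
        (e = f \<longrightarrow> constant2 (induced \<sigma> (ext_set \<sigma> X)) \<and> Es (induced \<sigma> (ext_set \<sigma> X)) = {restr e (ext_set \<sigma> X)}) \<and>
        (e \<noteq> f \<longrightarrow> linear2 (induced \<sigma> (ext_set \<sigma> X)) \<and> Es (induced \<sigma> (ext_set \<sigma> X)) = {restr e (ext_set \<sigma> X), restr f (ext_set \<sigma> X)}))"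
    if eE: "e \<in> Es \<sigma>" and fE: "f \<in> Es \<sigma>" for e f
    unfolding extA[OF eE fE] ext_set_eq using gen[OF coreA eE fE] .
  have GB: "(card_ge 2 (alpha_set_ef \<sigma> X a e f) \<longrightarrow>
        (e = f \<longrightarrow> constant2 (induced \<sigma> (alpha_set \<sigma> X a)) \<and> Es (induced \<sigma> (alpha_set \<sigma> X a)) = {restr e (alpha_set \<sigma> X a)}) \<and>
        (e \<noteq> f \<longrightarrow> linear2 (induced \<sigma> (alpha_set \<sigma> X a)) \<and> Es (induced \<sigma> (alpha_set \<sigma> X a)) = {restr e (alpha_set \<sigma> X a), restr f (alpha_set \<sigma> X a)}))"
    if a: "a \<in> X" and eE: "e \<in> Es \<sigma>" and fE: "f \<in> Es \<sigma>" for a e f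
    unfolding extB[OF a] alpha_set_eq[OF a] using gen[OF Bint[OF a] eE fE] .
  show ?thesis
  proof (intro conjI ballI impI)
    fix e assume eE: "e \<in> Es \<sigma>"
    {
      assume "card_ge 2 (ext_set_ef \<sigma> X e e)"
      then show "constant2 (induced \<sigma> (ext_set \<sigma> X))" "Es (induced \<sigma> (ext_set \<sigma> X)) = {restr e (ext_set \<sigma> X)}"
        using GA[OF eE eE] by auto
    }
    fix \<alpha> assume a: "\<alpha> \<in> X"
    {
      assume "card_ge 2 (alpha_set_ef \<sigma> X \<alpha> e e)"
      then show "constant2 (induced \<sigma> (alpha_set \<sigma> X \<alpha>))" "Es (induced \<sigma> (alpha_set \<sigma> X \<alpha>)) = {restr e (alpha_set \<sigma> X \<alpha>)}"
        using GB[OF a eE eE] by auto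
    }
  next
    fix e f assume eE: "e \<in> Es \<sigma>" and fE: "f \<in> Es \<sigma>" and ef: "e \<noteq> f"
    {
      assume "card_ge 2 (ext_set_ef \<sigma> X e f)"
      then show "linear2 (induced \<sigma> (ext_set \<sigma> X))" "Es (induced \<sigma> (ext_set \<sigma> X)) = {restr e (ext_set \<sigma> X), restr f (ext_set \<sigma> X)}"
        using GA[OF eE fE] ef by auto
    }
    fix \<alpha> assume a: "\<alpha> \<in> X"
    {
      assume "card_ge 2 (alpha_set_ef \<sigma> X \<alpha> e f)"
      then show "linear2 (induced \<sigma> (alpha_set \<sigma> X \<alpha>))" "Es (induced \<sigma> (alpha_set \<sigma> X \<alpha>)) = {restr e (alpha_set \<sigma> X \<alpha>), restr f (alpha_set \<sigma> X \<alpha>)}"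
        using GB[OF a eE fE] ef by auto
    }
  qed
qed

end
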